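(* For every $N$-relay FD 1-2-1 network with a directed graph $G=([0:N+1],E)$ and positive rational link capacities as in the context, $\mathsf{C}_{\rm cs,iid}$ (FD states) equals the optimal value of the linear program $$\mathrm{P1}:\ \max\sum_{p\in\mathcal P}x_p\mathsf C_p\quad\text{s.t.}\quad x_p\ge0\ \ \forall p\in\mathcal P;\qquad \sum_{p\in\mathcal P_i}x_p f^p_{p.\mathrm{nx}(i),i}\le1\ \ \forall i\in[0:N];\qquad \sum_{p\in\mathcal P_i}x_p f^p_{i,p.\mathrm{pr}(i)}\le1\ \ \forall i\in[1:N+1].$$
   Context: Nodes are $[0:N+1]$; node $0$ is the source, $N+1$ the destination, $[1:N]$ relays. Let $E\subseteq\{(i,j): i\in[0:N],\ j\in[1:N+1],\ i\ne j\}$ be a set of directed links; each $(i,j)\in E$ has a positive rational capacity $\ell_{j,i}$, and $\ell_{j,i}=0$ for $(i,j)\notin E$. FD network states: a state $s$ consists of sets $s_{i,t}\subseteq[1:N+1]\setminus\{i\}$ and $s_{i,r}\subseteq[0:N]\setminus\{i\}$, each of cardinality at most $1$, for $i\in[0:N+1]$, with $s_{0,r}=s_{N+1,t}=\emptyset$; $\mathcal S$ is the finite set of all states. Link $(i,j)$ is active in $s$ if $j\in s_{i,t}$ and $i\in s_{j,r}$. Define $$\mathsf{C}_{\rm cs,iid}=\max_{\lambda}\ \min_{\Omega}\ \sum_{i\in\Omega,\ j\in\Omega^c}\Big(\sum_{s\in\mathcal S:\ (i,j)\text{ active in }s}\lambda_s\Big)\ell_{j,i},$$ with the maximum over probability vectors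 $(\lambda_s)_{s\in\mathcal S}$, the minimum over $\Omega$ with $0\in\Omega\subseteq[0:N]$, and $\Omega^c=[0:N+1]\setminus\Omega$. Paths: $\mathcal P$ is the set of all directed paths $p=(v_0,v_1,\dots,v_m)$ of distinct nodes with $v_0=0$, $v_m=N+1$ and $(v_{k-1},v_k)\in E$ for all $k$. For a node $i$ on $p$, $p.\mathrm{nx}(i)$ and $p.\mathrm{pr}(i)$ denote the node following and preceding $i$ on $p$. $\mathcal P_i\subseteq\mathcal P$ is the set of paths containing node $i$ (so $\mathcal P_0=\mathcal P_{N+1}=\mathcal P$). $\mathsf C_p=\min_{(i,j)\text{ consecutive on }p}\ell_{j,i}$, and for consecutive $(i,j)$ on $p$, $f^p_{j,i}=\mathsf C_p/\ell_{j,i}$. *)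

theory Defs
  imports Complex_Main
begin

text \<open>Nodes are natural numbers 0..N+1; node 0 is the source, N+1 the destination.
  A link (i,j) has capacity ell j i (note the index order of the paper, ell_{j,i}).\<close>

definition valid_network :: "nat \<Rightarrow> (nat \<times> nat) set \<Rightarrow> (nat \<Rightarrow> nat \<Rightarrow> real) \<Rightarrow> bool" where
  "valid_network N E ell \<longleftrightarrow>
     E \<subseteq> {(i,j). i \<le> N \<and> 1 \<le> j \<and> j \<le> N + 1 \<and> i \<noteq> j} \<and>
     (\<forall>i j. (i,j) \<in> E \<longrightarrow> ell j i \<in> \<rat> \<and> ell j i > 0) \<and>
     (\<forall>i j. (i,j) \<notin> E \<longrightarrow> ell j i = 0)"

text \<open>An FD state is a pair (st, sr) where st i = s_{i,t} and sr i = s_{i,r};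
  outside [0:N+1] both are fixed to be empty (so the state set is finite).\<close>

type_synonym state = "(nat \<Rightarrow> nat set) \<times> (nat \<Rightarrow> nat set)"

definition fd_states :: "nat \<Rightarrow> state set" where
  "fd_states N = {(st, sr).
      (\<forall>i \<le> N + 1. st i \<subseteq> {1..N+1} - {i} \<and> card (st i) \<le> 1 \<and>
                    sr i \<subseteq> {0..N} - {i} \<and> card (sr i) \<le> 1) \<and>
      (\<forall>i > N + 1. st i = {} \<and> sr i = {}) \<and>
      sr 0 = {} \<and> st (N + 1) = {}}"

definition link_active :: "state \<Rightarrow> nat \<Rightarrow> nat \<Rightarrow> bool" where
  "link_active s i j \<longleftrightarrow> j \<in> fst s i \<and> i \<in> snd s j"

definition prob_vector :: "nat \<Rightarrow> (state \<Rightarrow> real) \<Rightarrow> bool" where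
  "prob_vector N lam \<longleftrightarrow> (\<forall>s \<in> fd_states N. lam s \<ge> 0) \<and> (\<Sum>s \<in> fd_states N. lam s) = 1"

definition cuts :: "nat \<Rightarrow> nat set set" where
  "cuts N = {\<Omega>. 0 \<in> \<Omega> \<and> \<Omega> \<subseteq> {0..N}}"

definition cut_value :: "nat \<Rightarrow> (nat \<Rightarrow> nat \<Rightarrow> real) \<Rightarrow> (state \<Rightarrow> real) \<Rightarrow> nat set \<Rightarrow> real" where
  "cut_value N ell lam \<Omega> =
     (\<Sum>i \<in> \<Omega>. \<Sum>j \<in> {0..N+1} - \<Omega>.
        (\<Sum>s \<in> {s \<in> fd_states N. link_active s i j}. lam s) * ell j i)"

text \<open>C_cs,iid = max over probability vectors of min over cuts; the max is rendered as a
  supremum (it is attained).\<close>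

definition C_cs_iid :: "nat \<Rightarrow> (nat \<Rightarrow> nat \<Rightarrow> real) \<Rightarrow> real" where
  "C_cs_iid N ell = Sup {Min (cut_value N ell lam ` cuts N) | lam. prob_vector N lam}"

definition paths :: "nat \<Rightarrow> (nat \<times> nat) set \<Rightarrow> nat list set" where
  "paths N E = {p. distinct p \<and> p \<noteq> [] \<and> hd p = 0 \<and> last p = N + 1 \<and>
                   (\<forall>k. Suc k < length p \<longrightarrow> (p ! k, p ! Suc k) \<in> E)}"

definition nx :: "nat list \<Rightarrow> nat \<Rightarrow> nat" where
  "nx p i = (THE j. \<exists>k. Suc k < length p \<and> p ! k = i \<and> p ! Suc k = j)"

definition pr :: "nat list \<Rightarrow> nat \<Rightarrow> nat" where
  "pr p i = (THE j. \<exists>k. Suc k < length p \<and> p ! k = j \<and> p ! Suc k = i)"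

definition path_cap :: "(nat \<Rightarrow> nat \<Rightarrow> real) \<Rightarrow> nat list \<Rightarrow> real" where
  "path_cap ell p = Min {ell (p ! Suc k) (p ! k) | k. Suc k < length p}"

definition fp :: "(nat \<Rightarrow> nat \<Rightarrow> real) \<Rightarrow> nat list \<Rightarrow> nat \<Rightarrow> nat \<Rightarrow> real" where
  "fp ell p j i = path_cap ell p / ell j i"

definition P1_feasible :: "nat \<Rightarrow> (nat \<times> nat) set \<Rightarrow> (nat \<Rightarrow> nat \<Rightarrow> real) \<Rightarrow> (nat list \<Rightarrow> real) \<Rightarrow> bool" where
  "P1_feasible N E ell x \<longleftrightarrow>
     (\<forall>p \<in> paths N E. x p \<ge> 0) \<and>
     (\<forall>i \<in> {0..N}. (\<Sum>p \<in> {p \<in> paths N E. i \<in> set p}. x p * fp ell p (nx p i) i) \<le> 1) \<and>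
     (\<forall>i \<in> {1..N+1}. (\<Sum>p \<in> {p \<in> paths N E. i \<in> set p}. x p * fp ell p i (pr p i)) \<le> 1)"

text \<open>Optimal value of the LP P1 (rendered as a supremum; the LP optimum is attained).\<close>

definition P1_value :: "nat \<Rightarrow> (nat \<times> nat) set \<Rightarrow> (nat \<Rightarrow> nat \<Rightarrow> real) \<Rightarrow> real" where
  "P1_value N E ell = Sup {(\<Sum>p \<in> paths N E. x p * path_cap ell p) | x. P1_feasible N E ell x}"

end

theory Submission
  imports Defs
begin

lemma hall_aux:
  fixes nb :: "'a \<Rightarrow> 'b set"
  assumes "finite R" "\<forall>r\<in>R. finite (nb r)" "\<forall>A\<subseteq>R. card A \<le> card (\<Union>(nb ` A))"
  shows "\<exists>f. inj_on f R \<and> (\<forall>r\<in>R. f r \<in> nb r)"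
  using assms
proof (induction "card R" arbitrary: R nb rule: less_induct)
  case less
  note IH = less.hyps
  have finN: "\<And>A. A \<subseteq> R \<Longrightarrow> finite (\<Union>(nb ` A))"
    using less.prems by (meson finite_UN_I finite_subset subsetD)
  show ?case
  proof (cases "R = {}")
    case True then show ?thesis by auto
  next
    case Rne: False
    show ?thesis
    proof (cases "\<forall>A. A \<subseteq> R \<and> A \<noteq> {} \<and> A \<noteq> R \<longrightarrow> card A < card (\<Union>(nb ` A))")
      case True
      obtain r0 where r0: "r0 \<in> R" using Rne by auto
      have "card {r0} \<le> card (\<Union>(nb ` {r0}))" using less.prems(3) r0 by blast
      then have "card {r0} \<le> card (nb r0)" by simp
      then have "nb r0 \<noteq> {}" by auto
      then obtain c0 where c0: "c0 \<in> nb r0" by auto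
      define R' where "R' = R - {r0}"
      define nb' where "nb' = (\<lambda>r. nb r - {c0})"
      have "card R' < card R" unfolding R'_def using r0 less.prems(1) by (intro card_Diff1_less)
      moreover have "finite R'" using less.prems(1) R'_def by auto
      moreover have "\<forall>r\<in>R'. finite (nb' r)" using less.prems(2) unfolding R'_def nb'_def by auto
      moreover have "\<forall>A\<subseteq>R'. card A \<le> card (\<Union>(nb' ` A))"
      proof (intro allI impI)
        fix A assume A: "A \<subseteq> R'"
        show "card A \<le> card (\<Union>(nb' ` A))"
        proof (cases "A = {}")
          case True then show ?thesis by simp
        next
          case False
          have "A \<noteq> R" using A r0 R'_def by auto
          moreover have "A \<subseteq> R" using A R'_def by auto
          ultimately have lt: "card A < card (\<Union>(nb ` A))" using True False by auto
          have sub: "\<Union>(nb ` A) \<subseteq> insert c0 (\<Union>(nb' ` A))" unfolding nb'_def by auto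
          have "finite (\<Union>(nb' ` A))" using finN[OF \<open>A \<subseteq> R\<close>] unfolding nb'_def
            by (rule finite_subset[rotated]) auto
          then have "card (\<Union>(nb ` A)) \<le> card (insert c0 (\<Union>(nb' ` A)))"
            using sub by (intro card_mono) auto
          also have "\<dots> \<le> Suc (card (\<Union>(nb' ` A)))" by (simp add: card_insert_le_m1)
          finally show ?thesis using lt by linarith
        qed
      qed
      ultimately obtain f' where f': "inj_on f' R'" "\<forall>r\<in>R'. f' r \<in> nb' r"
        using IH by blast
      define f where "f = f'(r0 := c0)"
      have "inj_on f R"
      proof -
        have "R = insert r0 R'" using r0 R'_def by auto
        moreover have "inj_on f R'" using f'(1) unfolding f_def R'_def by (auto simp: inj_on_def)
        moreover have "f r0 \<notin> f ` R'" using f'(2) unfolding f_def nb'_def R'_def by auto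
        moreover have "r0 \<notin> R'" using R'_def by auto
        ultimately show ?thesis by simp
      qed
      moreover have "\<forall>r\<in>R. f r \<in> nb r" using f'(2) c0 unfolding f_def nb'_def R'_def by auto
      ultimately show ?thesis by blast
    next
      case False
      then obtain A where A0: "A \<subseteq> R" "A \<noteq> {}" "A \<noteq> R" "\<not> card A < card (\<Union>(nb ` A))" by blast
      then have A: "A \<subseteq> R" "A \<noteq> {}" "A \<noteq> R" "card (\<Union>(nb ` A)) \<le> card A" by auto
      have eqA: "card (\<Union>(nb ` A)) = card A" using A less.prems(3) by (simp add: le_antisym)
      have finA: "finite A" using A(1) less.prems(1) finite_subset by auto
      have "card A < card R" using A less.prems(1) by (meson psubsetI psubset_card_mono)
      moreover have "\<forall>r\<in>A. finite (nb r)" using less.prems(2) A(1) by blast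
      moreover have "\<forall>B\<subseteq>A. card B \<le> card (\<Union>(nb ` B))" using less.prems(3) A(1) by blast
      ultimately obtain f1 where f1: "inj_on f1 A" "\<forall>r\<in>A. f1 r \<in> nb r"
        using IH[of A nb] finA by blast
      define R2 where "R2 = R - A"
      define nb2 where "nb2 = (\<lambda>r. nb r - \<Union>(nb ` A))"
      have "card R2 < card R" unfolding R2_def using A less.prems(1)
        using card_Diff_subset[OF finA A(1)] finA card_gt_0_iff[of A] by auto
      moreover have "finite R2" using less.prems(1) R2_def by auto
      moreover have "\<forall>r\<in>R2. finite (nb2 r)" using less.prems(2) unfolding R2_def nb2_def by auto
      moreover have "\<forall>B\<subseteq>R2. card B \<le> card (\<Union>(nb2 ` B))"
      proof (intro allI impI)
        fix B assume B: "B \<subseteq> R2"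
        have AB: "A \<union> B \<subseteq> R" using A B R2_def by auto
        have disj: "A \<inter> B = {}" using B R2_def by auto
        have finB: "finite B" using B \<open>finite R2\<close> finite_subset by auto
        have eq: "\<Union>(nb2 ` B) = \<Union>(nb ` (A \<union> B)) - \<Union>(nb ` A)" unfolding nb2_def by auto
        have "card (\<Union>(nb ` (A \<union> B))) - card (\<Union>(nb ` A)) \<le> card (\<Union>(nb2 ` B))"
          unfolding eq using finN[OF A(1)] by (rule diff_card_le_card_Diff)
        moreover have "card (A \<union> B) \<le> card (\<Union>(nb ` (A \<union> B)))" using less.prems(3) AB by blast
        moreover have "card (A \<union> B) = card A + card B" using disj finA finB by (simp add: card_Un_disjoint)
        ultimately show "card B \<le> card (\<Union>(nb2 ` B))" using eqA by linarith
      qed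
      ultimately obtain f2 where f2: "inj_on f2 R2" "\<forall>r\<in>R2. f2 r \<in> nb2 r"
        using IH by blast
      define f where "f = (\<lambda>r. if r \<in> A then f1 r else f2 r)"
      have "inj_on f R"
      proof (rule inj_onI)
        fix x y assume xy: "x \<in> R" "y \<in> R" "f x = f y"
        show "x = y"
        proof (cases "x \<in> A"; cases "y \<in> A")
          assume "x \<in> A" "y \<in> A" then show ?thesis using xy f1(1) f_def by (auto simp: inj_on_def)
        next
          assume a: "x \<in> A" "y \<notin> A"
          have "f x \<in> \<Union>(nb ` A)" using a f1(2) f_def by auto
          moreover have "y \<in> R2" using a xy R2_def by auto
          then have "f y \<notin> \<Union>(nb ` A)" using a f2(2) f_def nb2_def by auto
          ultimately show ?thesis using xy by simp
        next
          assume a: "x \<notin> A" "y \<in> A"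
          have "f y \<in> \<Union>(nb ` A)" using a f1(2) f_def by auto
          moreover have "x \<in> R2" using a xy R2_def by auto
          then have "f x \<notin> \<Union>(nb ` A)" using a f2(2) f_def nb2_def by auto
          ultimately show ?thesis using xy by simp
        next
          assume "x \<notin> A" "y \<notin> A" then show ?thesis using xy f2(1) f_def R2_def by (auto simp: inj_on_def)
        qed
      qed
      moreover have "\<forall>r\<in>R. f r \<in> nb r" using f1(2) f2(2) unfolding f_def R2_def nb2_def by auto
      ultimately show ?thesis by blast
    qed
  qed
qed


lemma sum_insert_extra:
  assumes "finite S"
  shows "(\<Sum>\<tau>\<in>{\<tau>\<in>insert \<sigma> S. P \<tau>}. (if \<tau> \<in> S then m \<tau> else 0) + (if \<tau> = \<sigma> then t else 0))
       = (\<Sum>\<tau>\<in>{\<tau>\<in>S. P \<tau>}. m \<tau>) + (if P \<sigma> then t else (0::real))"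
proof -
  have fin: "finite {\<tau>\<in>insert \<sigma> S. P \<tau>}" using assms by auto
  have a: "(\<Sum>\<tau>\<in>{\<tau>\<in>insert \<sigma> S. P \<tau>}. (if \<tau> \<in> S then m \<tau> else 0)) = (\<Sum>\<tau>\<in>{\<tau>\<in>S. P \<tau>}. m \<tau>)"
  proof -
    have "(\<Sum>\<tau>\<in>{\<tau>\<in>insert \<sigma> S. P \<tau>}. (if \<tau> \<in> S then m \<tau> else 0)) = (\<Sum>\<tau>\<in>{\<tau>\<in>S. P \<tau>}. (if \<tau> \<in> S then m \<tau> else 0))"
      by (rule sum.mono_neutral_right) (use fin in auto)
    then show ?thesis by simp
  qed
  have b: "(\<Sum>\<tau>\<in>{\<tau>\<in>insert \<sigma> S. P \<tau>}. (if \<tau> = \<sigma> then t else 0)) = (if P \<sigma> then t else 0)"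
    using fin by (simp add: sum.delta)
  show ?thesis using a b by (simp add: sum.distrib)
qed

lemma birkhoff_aux:
  fixes D :: "'a \<Rightarrow> 'b \<Rightarrow> real"
  assumes "finite R" "finite C" "R \<noteq> {}"
    "\<forall>r\<in>R. \<forall>c\<in>C. D r c \<ge> 0"
    "\<forall>r\<in>R. (\<Sum>c\<in>C. D r c) = k" "\<forall>c\<in>C. (\<Sum>r\<in>R. D r c) = k"
  shows "\<exists>S \<mu>. finite S \<and> (\<forall>\<sigma>\<in>S. \<mu> \<sigma> \<ge> 0 \<and> inj_on \<sigma> R \<and> \<sigma> ` R \<subseteq> C) \<and>
     (\<Sum>\<sigma>\<in>S. \<mu> \<sigma>) = k \<and> (\<forall>r\<in>R. \<forall>c\<in>C. D r c = (\<Sum>\<sigma>\<in>{\<sigma>\<in>S. \<sigma> r = c}. \<mu> \<sigma>))"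
  using assms
proof (induction "card {(r,c). r \<in> R \<and> c \<in> C \<and> D r c \<noteq> 0}" arbitrary: D k rule: less_induct)
  case less
  note IH = less.hyps
  have k0: "k \<ge> 0"
  proof -
    obtain r where "r \<in> R" using less.prems(3) by auto
    then have "k = (\<Sum>c\<in>C. D r c)" using less.prems(5) by auto
    also have "\<dots> \<ge> 0" using less.prems(4) \<open>r \<in> R\<close> by (intro sum_nonneg) auto
    finally show ?thesis .
  qed
  show ?case
  proof (cases "k = 0")
    case True
    have "\<forall>r\<in>R. \<forall>c\<in>C. D r c = 0"
    proof (intro ballI)
      fix r c assume rc: "r \<in> R" "c \<in> C"
      have "(\<Sum>c\<in>C. D r c) = 0" using less.prems(5) rc True by auto
      then show "D r c = 0" using sum_nonneg_eq_0_iff[of C "D r"] less.prems(2,4) rc by auto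
    qed
    then show ?thesis using True by (intro exI[of _ "{}"]) auto
  next
    case False
    then have kpos: "k > 0" using k0 by auto
    define nb where "nb = (\<lambda>r. {c\<in>C. D r c > 0})"
    have hallc: "\<forall>A\<subseteq>R. card A \<le> card (\<Union>(nb ` A))"
    proof (intro allI impI)
      fix A assume A: "A \<subseteq> R"
      have finA: "finite A" using A less.prems(1) finite_subset by auto
      have NA: "\<Union>(nb ` A) \<subseteq> C" unfolding nb_def by auto
      have "(\<Sum>r\<in>A. \<Sum>c\<in>C. D r c) = (\<Sum>r\<in>A. k)" by (rule sum.cong) (use A less.prems(5) in auto)
      then have "real (card A) * k = (\<Sum>r\<in>A. \<Sum>c\<in>C. D r c)" by simp
      also have "\<dots> = (\<Sum>r\<in>A. \<Sum>c\<in>\<Union>(nb ` A). D r c)"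
      proof (rule sum.cong[OF refl])
        fix r assume r: "r \<in> A"
        show "(\<Sum>c\<in>C. D r c) = (\<Sum>c\<in>\<Union>(nb ` A). D r c)"
          by (rule sum.mono_neutral_right[OF less.prems(2) NA]) (use r A less.prems(4) nb_def in force)
      qed
      also have "\<dots> = (\<Sum>c\<in>\<Union>(nb ` A). \<Sum>r\<in>A. D r c)" by (rule sum.swap)
      also have "\<dots> \<le> (\<Sum>c\<in>\<Union>(nb ` A). \<Sum>r\<in>R. D r c)"
        by (intro sum_mono sum_mono2[OF less.prems(1) A]) (use less.prems(4) NA in auto)
      also have "\<dots> = (\<Sum>c\<in>\<Union>(nb ` A). k)" by (rule sum.cong) (use less.prems(6) NA in auto)
      also have "\<dots> = real (card (\<Union>(nb ` A))) * k" by simp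
      finally show "card A \<le> card (\<Union>(nb ` A))" using kpos by simp
    qed
    obtain \<sigma> where \<sigma>: "inj_on \<sigma> R" "\<forall>r\<in>R. \<sigma> r \<in> nb r"
      using hall_aux[OF less.prems(1) _ hallc] less.prems(2) unfolding nb_def by auto
    have \<sigma>C: "\<sigma> ` R \<subseteq> C" and \<sigma>pos: "\<forall>r\<in>R. D r (\<sigma> r) > 0" using \<sigma>(2) unfolding nb_def by auto
    have cardRC: "card R = card C"
    proof -
      have "real (card R) * k = (\<Sum>r\<in>R. \<Sum>c\<in>C. D r c)" using less.prems(5) by auto
      also have "\<dots> = (\<Sum>c\<in>C. \<Sum>r\<in>R. D r c)" by (rule sum.swap)
      also have "\<dots> = real (card C) * k" using less.prems(6) by auto
      finally show ?thesis using kpos by simp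
    qed
    have \<sigma>surj: "\<sigma> ` R = C"
      using card_subset_eq[OF less.prems(2) \<sigma>C] card_image[OF \<sigma>(1)] cardRC by auto
    define t where "t = Min ((\<lambda>r. D r (\<sigma> r)) ` R)"
    have tin: "t \<in> (\<lambda>r. D r (\<sigma> r)) ` R" unfolding t_def using less.prems(1,3) by (intro Min_in) auto
    then obtain r0 where r0: "r0 \<in> R" "t = D r0 (\<sigma> r0)" by auto
    have tle: "\<forall>r\<in>R. t \<le> D r (\<sigma> r)" unfolding t_def using less.prems(1) by auto
    have tpos: "t > 0" using r0 \<sigma>pos by auto
    define D' where "D' = (\<lambda>r c. D r c - (if \<sigma> r = c then t else 0))"
    have uniq: "\<And>c. c \<in> C \<Longrightarrow> {r\<in>R. \<sigma> r = c} = {the_inv_into R \<sigma> c}"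
    proof -
      fix c assume c: "c \<in> C"
      then obtain r where r: "r \<in> R" "\<sigma> r = c" using \<sigma>surj by auto
      then have "{r\<in>R. \<sigma> r = c} = {r}" using \<sigma>(1) by (auto simp: inj_on_def)
      moreover have "the_inv_into R \<sigma> c = r" using r \<sigma>(1) by (auto intro: the_inv_into_f_eq)
      ultimately show "{r\<in>R. \<sigma> r = c} = {the_inv_into R \<sigma> c}" by simp
    qed
    have row': "\<forall>r\<in>R. (\<Sum>c\<in>C. D' r c) = k - t"
    proof
      fix r assume r: "r \<in> R"
      have "(\<Sum>c\<in>C. D' r c) = (\<Sum>c\<in>C. D r c) - (\<Sum>c\<in>C. (if \<sigma> r = c then t else 0))"
        unfolding D'_def by (simp add: sum_subtractf)
      also have "(\<Sum>c\<in>C. (if \<sigma> r = c then t else 0)) = t"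
        using r \<sigma>C less.prems(2) by (auto simp: sum.delta)
      finally show "(\<Sum>c\<in>C. D' r c) = k - t" using r less.prems(5) by auto
    qed
    have col': "\<forall>c\<in>C. (\<Sum>r\<in>R. D' r c) = k - t"
    proof
      fix c assume c: "c \<in> C"
      have "(\<Sum>r\<in>R. D' r c) = (\<Sum>r\<in>R. D r c) - (\<Sum>r\<in>R. (if \<sigma> r = c then t else 0))"
        unfolding D'_def by (simp add: sum_subtractf)
      also have "(\<Sum>r\<in>R. (if \<sigma> r = c then t else 0)) = (\<Sum>r\<in>{r\<in>R. \<sigma> r = c}. t)"
        by (rule sum.inter_filter[symmetric, OF less.prems(1)])
      also have "\<dots> = t" using uniq[OF c] by simp
      finally show "(\<Sum>r\<in>R. D' r c) = k - t" using c less.prems(6) by auto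
    qed
    have nn': "\<forall>r\<in>R. \<forall>c\<in>C. D' r c \<ge> 0"
      unfolding D'_def using less.prems(4) tle by auto
    have supp: "{(r,c). r \<in> R \<and> c \<in> C \<and> D' r c \<noteq> 0} \<subset> {(r,c). r \<in> R \<and> c \<in> C \<and> D r c \<noteq> 0}"
    proof
      show "{(r,c). r \<in> R \<and> c \<in> C \<and> D' r c \<noteq> 0} \<subseteq> {(r,c). r \<in> R \<and> c \<in> C \<and> D r c \<noteq> 0}"
        using \<sigma>pos unfolding D'_def by auto
      have "(r0, \<sigma> r0) \<in> {(r,c). r \<in> R \<and> c \<in> C \<and> D r c \<noteq> 0}" using r0 \<sigma>C tpos by auto
      moreover have "(r0, \<sigma> r0) \<notin> {(r,c). r \<in> R \<and> c \<in> C \<and> D' r c \<noteq> 0}" using r0 unfolding D'_def by auto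
      ultimately show "{(r,c). r \<in> R \<and> c \<in> C \<and> D' r c \<noteq> 0} \<noteq> {(r,c). r \<in> R \<and> c \<in> C \<and> D r c \<noteq> 0}" by blast
    qed
    have "finite {(r,c). r \<in> R \<and> c \<in> C \<and> D r c \<noteq> 0}"
      by (rule finite_subset[of _ "R \<times> C"]) (use less.prems(1,2) in auto)
    then have "card {(r,c). r \<in> R \<and> c \<in> C \<and> D' r c \<noteq> 0} < card {(r,c). r \<in> R \<and> c \<in> C \<and> D r c \<noteq> 0}"
      using supp by (rule psubset_card_mono)
    then obtain S' \<mu>' where S': "finite S'" "\<forall>\<sigma>\<in>S'. \<mu>' \<sigma> \<ge> 0 \<and> inj_on \<sigma> R \<and> \<sigma> ` R \<subseteq> C"
      "(\<Sum>\<sigma>\<in>S'. \<mu>' \<sigma>) = k - t" "\<forall>r\<in>R. \<forall>c\<in>C. D' r c = (\<Sum>\<sigma>\<in>{\<sigma>\<in>S'. \<sigma> r = c}. \<mu>' \<sigma>)"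
      using IH[of D' "k - t"] less.prems(1,2,3) nn' row' col' by blast
    define S where "S = insert \<sigma> S'"
    define \<mu> where "\<mu> = (\<lambda>\<tau>. (if \<tau> \<in> S' then \<mu>' \<tau> else 0) + (if \<tau> = \<sigma> then t else 0))"
    have "finite S" using S'(1) S_def by auto
    moreover have "\<forall>\<tau>\<in>S. \<mu> \<tau> \<ge> 0 \<and> inj_on \<tau> R \<and> \<tau> ` R \<subseteq> C"
      using S'(2) \<sigma>(1) \<sigma>C tpos unfolding S_def \<mu>_def by auto
    moreover have "(\<Sum>\<tau>\<in>S. \<mu> \<tau>) = k"
    proof -
      have "(\<Sum>\<tau>\<in>S. \<mu> \<tau>) = (\<Sum>\<tau>\<in>{\<tau>\<in>insert \<sigma> S'. True}. (if \<tau> \<in> S' then \<mu>' \<tau> else 0) + (if \<tau> = \<sigma> then t else 0))"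
        unfolding S_def \<mu>_def by (rule sum.cong) auto
      also have "\<dots> = (\<Sum>\<tau>\<in>{\<tau>\<in>S'. True}. \<mu>' \<tau>) + (if True then t else 0)"
        by (rule sum_insert_extra[OF S'(1)])
      also have "\<dots> = k" using S'(3) by simp
      finally show ?thesis .
    qed
    moreover have "\<forall>r\<in>R. \<forall>c\<in>C. D r c = (\<Sum>\<tau>\<in>{\<tau>\<in>S. \<tau> r = c}. \<mu> \<tau>)"
    proof (intro ballI)
      fix r c assume rc: "r \<in> R" "c \<in> C"
      have "(\<Sum>\<tau>\<in>{\<tau>\<in>S. \<tau> r = c}. \<mu> \<tau>) = (\<Sum>\<tau>\<in>{\<tau>\<in>S'. \<tau> r = c}. \<mu>' \<tau>) + (if \<sigma> r = c then t else 0)"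
        using sum_insert_extra[OF S'(1), where \<sigma>=\<sigma> and P="\<lambda>\<tau>. \<tau> r = c" and m=\<mu>' and t=t] unfolding S_def \<mu>_def by simp
      also have "\<dots> = D r c"
      proof -
        have "D' r c = (\<Sum>\<tau>\<in>{\<tau>\<in>S'. \<tau> r = c}. \<mu>' \<tau>)" using S'(4) rc by blast
        then show ?thesis unfolding D'_def by simp
      qed
      finally show "D r c = (\<Sum>\<tau>\<in>{\<tau>\<in>S. \<tau> r = c}. \<mu> \<tau>)" by simp
    qed
    ultimately show ?thesis by blast
  qed
qed


definition net :: "nat set \<Rightarrow> (nat \<Rightarrow> nat \<Rightarrow> real) \<Rightarrow> nat \<Rightarrow> real" where
  "net V g x = (\<Sum>u\<in>V. g u x) - (\<Sum>v\<in>V. g x v)"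

definition stepf :: "bool \<Rightarrow> nat \<Rightarrow> nat \<Rightarrow> nat \<Rightarrow> nat \<Rightarrow> real" where
  "stepf b a c u v = (if b then (if a = u \<and> c = v then 1 else 0) else (if c = u \<and> a = v then -1 else 0))"

definition walkf :: "(nat \<Rightarrow> bool) \<Rightarrow> (nat \<Rightarrow> nat) \<Rightarrow> nat \<Rightarrow> nat \<Rightarrow> nat \<Rightarrow> real" where
  "walkf fw w m u v = (\<Sum>k<m. stepf (fw k) (w k) (w (Suc k)) u v)"

lemma net_stepf:
  assumes "finite V" "a \<in> V" "c \<in> V"
  shows "net V (stepf b a c) x = (if c = x then 1 else 0) - (if a = x then 1 else 0)"
proof (cases b)
  case True
  have 1: "(\<Sum>u\<in>V. stepf b a c u x) = (if c = x then 1 else 0)"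
    using assms True by (simp add: stepf_def sum.delta' conj_commute)
  have 2: "(\<Sum>v\<in>V. stepf b a c x v) = (if a = x then 1 else 0)"
    using assms True by (simp add: stepf_def sum.delta)
  show ?thesis using 1 2 by (simp add: net_def)
next
  case False
  have 1: "(\<Sum>u\<in>V. stepf b a c u x) = - (if a = x then 1 else 0)"
  proof -
    have "(\<Sum>u\<in>V. stepf b a c u x) = (\<Sum>u\<in>V. if c = u then (if a = x then -1 else 0) else 0)"
      using False by (intro sum.cong) (auto simp: stepf_def)
    also have "\<dots> = (if a = x then -1 else 0)" using assms by (simp add: sum.delta)
    finally show ?thesis by simp
  qed
  have 2: "(\<Sum>v\<in>V. stepf b a c x v) = - (if c = x then 1 else 0)"
  proof -
    have "(\<Sum>v\<in>V. stepf b a c x v) = (\<Sum>v\<in>V. if a = v then (if c = x then -1 else 0) else 0)"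
      using False by (intro sum.cong) (auto simp: stepf_def)
    also have "\<dots> = (if c = x then -1 else 0)" using assms by (simp add: sum.delta)
    finally show ?thesis by simp
  qed
  show ?thesis using 1 2 by (simp add: net_def)
qed

lemma net_sum_fun:
  assumes "finite V"
  shows "net V (\<lambda>u v. \<Sum>k<m. h k u v) x = (\<Sum>k<m. net V (h k) x)"
  unfolding net_def by (simp add: sum.swap[of _ V] sum_subtractf)

lemma net_walkf:
  assumes "finite V" "\<forall>k\<le>m. w k \<in> V"
  shows "net V (walkf fw w m) x = (if w m = x then 1 else 0) - (if w 0 = x then 1 else 0)"
proof -
  have "walkf fw w m = (\<lambda>u v. \<Sum>k<m. stepf (fw k) (w k) (w (Suc k)) u v)"
    unfolding walkf_def by simp
  then have "net V (walkf fw w m) x = (\<Sum>k<m. net V (stepf (fw k) (w k) (w (Suc k))) x)"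
    using net_sum_fun[OF assms(1)] by simp
  also have "\<dots> = (\<Sum>k<m. (if w (Suc k) = x then 1 else 0) - (if w k = x then 1 else 0))"
    using assms by (intro sum.cong refl net_stepf) auto
  also have "\<dots> = (if w m = x then 1 else 0) - (if w 0 = x then 1 else 0)"
    by (rule sum_lessThan_telescope[where f = "\<lambda>k. if w k = x then 1 else (0::real)"])
  finally show ?thesis .
qed

lemma net_lin:
  "net V (\<lambda>u v. g u v + c * h u v) x = net V g x + c * net V h x"
  unfolding net_def by (simp add: sum.distrib sum_distrib_left algebra_simps)

lemma net_cong:
  assumes "\<forall>u\<in>V. \<forall>v\<in>V. g u v = h u v" "x \<in> V"
  shows "net V g x = net V h x"
  unfolding net_def using assms by (intro arg_cong2[where f="(-)"] sum.cong) auto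

lemma cut_lemma:
  assumes "finite V" "\<Omega> \<subseteq> V" "s \<in> \<Omega>" "\<forall>x\<in>\<Omega> - {s}. net V g x = 0"
  shows "- net V g s = (\<Sum>i\<in>\<Omega>. \<Sum>j\<in>V - \<Omega>. g i j) - (\<Sum>i\<in>V - \<Omega>. \<Sum>j\<in>\<Omega>. g i j)"
proof -
  have finO: "finite \<Omega>" using assms finite_subset by auto
  have "(\<Sum>x\<in>\<Omega>. net V g x) = net V g s + (\<Sum>x\<in>\<Omega> - {s}. net V g x)"
    using finO assms(3) by (simp add: sum.remove)
  also have "(\<Sum>x\<in>\<Omega> - {s}. net V g x) = 0" using assms(4) by simp
  finally have a: "(\<Sum>x\<in>\<Omega>. net V g x) = net V g s" by simp
  have split: "\<And>f. (\<Sum>u\<in>V. f u) = (\<Sum>u\<in>V - \<Omega>. f u) + (\<Sum>u\<in>\<Omega>. f u :: real)"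
    using assms(1,2) by (simp add: sum.subset_diff)
  have "(\<Sum>x\<in>\<Omega>. net V g x) = (\<Sum>x\<in>\<Omega>. \<Sum>u\<in>V - \<Omega>. g u x) + (\<Sum>x\<in>\<Omega>. \<Sum>u\<in>\<Omega>. g u x)
      - ((\<Sum>x\<in>\<Omega>. \<Sum>v\<in>V - \<Omega>. g x v) + (\<Sum>x\<in>\<Omega>. \<Sum>v\<in>\<Omega>. g x v))"
    unfolding net_def by (simp add: split sum.distrib sum_subtractf)
  moreover have "(\<Sum>x\<in>\<Omega>. \<Sum>u\<in>\<Omega>. g u x) = (\<Sum>x\<in>\<Omega>. \<Sum>v\<in>\<Omega>. g x v)" by (rule sum.swap)
  moreover have "(\<Sum>x\<in>\<Omega>. \<Sum>u\<in>V - \<Omega>. g u x) = (\<Sum>i\<in>V - \<Omega>. \<Sum>j\<in>\<Omega>. g i j)" by (rule sum.swap)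
  ultimately show ?thesis using a by simp
qed

lemma rtrancl_distinct_path:
  assumes "(x, y) \<in> R\<^sup>*"
  shows "\<exists>xs. distinct xs \<and> xs \<noteq> [] \<and> hd xs = x \<and> last xs = y \<and>
           (\<forall>k. Suc k < length xs \<longrightarrow> (xs ! k, xs ! Suc k) \<in> R)"
  using assms
proof (induction rule: converse_rtrancl_induct)
  case base
  then show ?case by (intro exI[of _ "[y]"]) auto
next
  case (step x z)
  then obtain zs where zs: "distinct zs" "zs \<noteq> []" "hd zs = z" "last zs = y"
      "\<forall>k. Suc k < length zs \<longrightarrow> (zs ! k, zs ! Suc k) \<in> R" by blast
  show ?case
  proof (cases "x \<in> set zs")
    case False
    have "\<forall>k. Suc k < length (x # zs) \<longrightarrow> ((x # zs) ! k, (x # zs) ! Suc k) \<in> R"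
    proof (intro allI impI)
      fix k assume k: "Suc k < length (x # zs)"
      show "((x # zs) ! k, (x # zs) ! Suc k) \<in> R"
      proof (cases k)
        case 0 then show ?thesis using step(1) zs(2,3) by (simp add: hd_conv_nth)
      next
        case (Suc k') then show ?thesis using zs(5) k by auto
      qed
    qed
    then show ?thesis using False zs by (intro exI[of _ "x # zs"]) auto
  next
    case True
    then obtain as bs where ab: "zs = as @ x # bs" by (meson split_list)
    have "\<forall>k. Suc k < length (x # bs) \<longrightarrow> ((x # bs) ! k, (x # bs) ! Suc k) \<in> R"
    proof (intro allI impI)
      fix k assume k: "Suc k < length (x # bs)"
      have "Suc (length as + k) < length zs" using k ab by simp
      then have "(zs ! (length as + k), zs ! Suc (length as + k)) \<in> R" using zs(5) by blast
      moreover have "zs ! (length as + k) = (x # bs) ! k" unfolding ab by (simp add: nth_append)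
      moreover have "zs ! Suc (length as + k) = (x # bs) ! Suc k" unfolding ab
        by (simp add: nth_append del: nth_Cons_Suc)
      ultimately show "((x # bs) ! k, (x # bs) ! Suc k) \<in> R" by simp
    qed
    moreover have "distinct (x # bs)" using zs(1) ab by auto
    moreover have "last (x # bs) = y" using zs(4) ab by (metis last_append last.simps list.distinct(1))
    ultimately show ?thesis by (intro exI[of _ "x # bs"]) auto
  qed
qed

lemma bw_finite:
  fixes f :: "nat \<Rightarrow> 'a \<Rightarrow> real"
  assumes "finite A" "\<forall>n. \<forall>x\<in>A. \<bar>f n x\<bar> \<le> B"
  shows "\<exists>r L. strict_mono r \<and> (\<forall>x\<in>A. (\<lambda>n. f (r n) x) \<longlonglongrightarrow> L x)"
  using assms
proof (induction A rule: finite_induct)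
  case empty
  then show ?case by (intro exI[of _ id]) (auto simp: strict_mono_def)
next
  case (insert a A)
  then obtain r L where rL: "strict_mono r" "\<forall>x\<in>A. (\<lambda>n. f (r n) x) \<longlonglongrightarrow> L x" by blast
  obtain r2 where r2: "strict_mono r2" "monoseq (\<lambda>n. f (r (r2 n)) a)"
    using seq_monosub[of "\<lambda>n. f (r n) a"] by auto
  have "Bseq (\<lambda>n. f (r (r2 n)) a)" using insert.prems by (intro BseqI'[of _ B]) auto
  then have "convergent (\<lambda>n. f (r (r2 n)) a)" using r2(2) by (rule Bseq_monoseq_convergent)
  then obtain la where la: "(\<lambda>n. f (r (r2 n)) a) \<longlonglongrightarrow> la" by (auto simp: convergent_def)
  have "strict_mono (r \<circ> r2)" using rL(1) r2(1) by (simp add: strict_mono_def)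
  moreover have "\<forall>x\<in>insert a A. (\<lambda>n. f ((r \<circ> r2) n) x) \<longlonglongrightarrow> (L(a := la)) x"
  proof
    fix x assume x: "x \<in> insert a A"
    show "(\<lambda>n. f ((r \<circ> r2) n) x) \<longlonglongrightarrow> (L(a := la)) x"
    proof (cases "x = a")
      case True then show ?thesis using la by simp
    next
      case False
      then have "x \<in> A" using x by auto
      then have "((\<lambda>n. f (r n) x) \<circ> r2) \<longlonglongrightarrow> L x" using rL(2) r2(1) LIMSEQ_subseq_LIMSEQ by blast
      then show ?thesis using False by (simp add: o_def)
    qed
  qed
  ultimately show ?case by blast
qed


definition isflow :: "nat set \<Rightarrow> nat \<Rightarrow> nat \<Rightarrow> (nat \<Rightarrow> nat \<Rightarrow> real) \<Rightarrow> (nat \<Rightarrow> nat \<Rightarrow> real) \<Rightarrow> bool" where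
  "isflow V s t cap g \<longleftrightarrow> (\<forall>u\<in>V. \<forall>v\<in>V. 0 \<le> g u v \<and> g u v \<le> cap u v) \<and> (\<forall>x\<in>V - {s, t}. net V g x = 0)"

lemma stepf_le1: "stepf b a c u v \<le> 1"
  unfolding stepf_def by (cases b) auto
lemma stepf_gem1: "-1 \<le> stepf b a c u v"
  unfolding stepf_def by (cases b) auto
lemma stepf_nonpos: "\<not> (b \<and> a = u \<and> c = v) \<Longrightarrow> stepf b a c u v \<le> 0"
  unfolding stepf_def by (cases b) auto
lemma stepf_nonneg: "\<not> (\<not> b \<and> c = u \<and> a = v) \<Longrightarrow> 0 \<le> stepf b a c u v"
  unfolding stepf_def by (cases b) auto
lemma walkf_le: "walkf fw w m u v \<le> real m"
proof -
  have "walkf fw w m u v \<le> (\<Sum>k<m. (1::real))" unfolding walkf_def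
    by (rule sum_mono) (rule stepf_le1)
  then show ?thesis by simp
qed
lemma walkf_ge: "- real m \<le> walkf fw w m u v"
proof -
  have "(\<Sum>k<m. (-1::real)) \<le> walkf fw w m u v" unfolding walkf_def
    by (rule sum_mono) (rule stepf_gem1)
  then show ?thesis by simp
qed
lemma walkf_nonpos: "\<forall>k<m. \<not> (fw k \<and> w k = u \<and> w (Suc k) = v) \<Longrightarrow> walkf fw w m u v \<le> 0"
  unfolding walkf_def by (rule sum_nonpos) (rule stepf_nonpos, auto)
lemma walkf_nonneg: "\<forall>k<m. \<not> (\<not> fw k \<and> w (Suc k) = u \<and> w k = v) \<Longrightarrow> 0 \<le> walkf fw w m u v"
  unfolding walkf_def by (rule sum_nonneg) (rule stepf_nonneg, auto)

lemma maxflow_cut: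
  assumes V: "finite V" "s \<in> V" "t \<in> V" "s \<noteq> t" and fl: "isflow V s t cap g"
    and mx: "\<forall>g'. isflow V s t cap g' \<longrightarrow> - net V g' s \<le> - net V g s"
  shows "\<exists>\<Omega>. s \<in> \<Omega> \<and> \<Omega> \<subseteq> V \<and> t \<notin> \<Omega> \<and> - net V g s = (\<Sum>i\<in>\<Omega>. \<Sum>j\<in>V - \<Omega>. cap i j)"
proof -
  define Res where "Res = {(u,v). u \<in> V \<and> v \<in> V \<and> (g u v < cap u v \<or> 0 < g v u)}"
  define S where "S = {x. (s, x) \<in> Res\<^sup>*}"
  have sS: "s \<in> S" unfolding S_def by simp
  have SV: "S \<subseteq> V"
  proof
    fix x assume "x \<in> S"
    then have "(s, x) \<in> Res\<^sup>*" unfolding S_def by simp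
    then show "x \<in> V" by (cases rule: rtranclE) (use V(2) Res_def in auto)
  qed
  show ?thesis
  proof (cases "t \<in> S")
    case True
    then have st: "(s, t) \<in> Res\<^sup>*" unfolding S_def by simp
    obtain xs where xs0: "distinct xs \<and> xs \<noteq> [] \<and> hd xs = s \<and> last xs = t \<and>
      (\<forall>k. Suc k < length xs \<longrightarrow> (xs ! k, xs ! Suc k) \<in> Res)"
      using rtrancl_distinct_path[OF st] by (elim exE) simp
    then have xs: "distinct xs" "xs \<noteq> []" "hd xs = s" "last xs = t"
      "\<forall>k. Suc k < length xs \<longrightarrow> (xs ! k, xs ! Suc k) \<in> Res" by blast+
    define m where "m = length xs - 1"
    define w where "w = (\<lambda>k. xs ! k)"
    have w0: "w 0 = s" using xs(2,3) unfolding w_def by (simp add: hd_conv_nth)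
    have wm: "w m = t" using xs(2,4) unfolding w_def m_def by (simp add: last_conv_nth)
    have m1: "m \<ge> 1" using w0 wm V(4) by (cases m) auto
    have stepR: "\<And>k. k < m \<Longrightarrow> (w k, w (Suc k)) \<in> Res" using xs(5) unfolding w_def m_def by auto
    have wV: "\<forall>k\<le>m. w k \<in> V"
    proof (intro allI impI)
      fix k assume "k \<le> m"
      then show "w k \<in> V"
      proof (cases "k = m")
        case True then show ?thesis using wm V(3) by simp
      next
        case False then show ?thesis using stepR[of k] \<open>k \<le> m\<close> Res_def by auto
      qed
    qed
    define fw where "fw = (\<lambda>k. g (w k) (w (Suc k)) < cap (w k) (w (Suc k)))"
    define res where "res = (\<lambda>k. if fw k then cap (w k) (w (Suc k)) - g (w k) (w (Suc k)) else g (w (Suc k)) (w k))"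
    have respos: "\<And>k. k < m \<Longrightarrow> res k > 0"
      using stepR unfolding res_def fw_def Res_def by auto
    define \<delta> where "\<delta> = Min (res ` {..<m})"
    have \<delta>in: "\<delta> \<in> res ` {..<m}" unfolding \<delta>_def using m1 by (intro Min_in) (auto simp: lessThan_empty_iff)
    have \<delta>pos: "\<delta> > 0" using \<delta>in respos by auto
    have \<delta>le: "\<And>k. k < m \<Longrightarrow> \<delta> \<le> res k" unfolding \<delta>_def by simp
    define \<epsilon> where "\<epsilon> = \<delta> / real m"
    have \<epsilon>pos: "\<epsilon> > 0" using \<delta>pos m1 by (simp add: \<epsilon>_def)
    have \<epsilon>m: "\<epsilon> * real m = \<delta>" using m1 by (simp add: \<epsilon>_def)
    define g' where "g' = (\<lambda>u v. g u v + \<epsilon> * walkf fw w m u v)"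
    have caps: "\<forall>u\<in>V. \<forall>v\<in>V. 0 \<le> g' u v \<and> g' u v \<le> cap u v"
    proof (intro ballI conjI)
      fix u v assume uv: "u \<in> V" "v \<in> V"
      show "g' u v \<le> cap u v"
      proof (cases "\<exists>k<m. fw k \<and> w k = u \<and> w (Suc k) = v")
        case True
        then obtain k where k: "k < m" "fw k" "w k = u" "w (Suc k) = v" by blast
        have "\<epsilon> * walkf fw w m u v \<le> \<epsilon> * real m" using \<epsilon>pos walkf_le by (intro mult_left_mono) auto
        moreover have "\<delta> \<le> cap u v - g u v" using \<delta>le[OF k(1)] k unfolding res_def by simp
        ultimately show ?thesis using \<epsilon>m unfolding g'_def by linarith
      next
        case False
        then have "walkf fw w m u v \<le> 0" by (intro walkf_nonpos) blast
        then have "\<epsilon> * walkf fw w m u v \<le> 0" using \<epsilon>pos by (simp add: mult_nonneg_nonpos)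
        moreover have "g u v \<le> cap u v" using fl uv unfolding isflow_def by blast
        ultimately show ?thesis unfolding g'_def by linarith
      qed
      show "0 \<le> g' u v"
      proof (cases "\<exists>k<m. \<not> fw k \<and> w (Suc k) = u \<and> w k = v")
        case True
        then obtain k where k: "k < m" "\<not> fw k" "w (Suc k) = u" "w k = v" by blast
        have "\<epsilon> * (- real m) \<le> \<epsilon> * walkf fw w m u v" using \<epsilon>pos walkf_ge by (intro mult_left_mono) auto
        then have "- (\<epsilon> * real m) \<le> \<epsilon> * walkf fw w m u v" by simp
        moreover have "\<delta> \<le> g u v" using \<delta>le[OF k(1)] k unfolding res_def by simp
        ultimately show ?thesis using \<epsilon>m unfolding g'_def by linarith
      next
        case False
        then have "0 \<le> walkf fw w m u v" by (intro walkf_nonneg) blast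
        then have "0 \<le> \<epsilon> * walkf fw w m u v" using \<epsilon>pos by simp
        moreover have "0 \<le> g u v" using fl uv unfolding isflow_def by blast
        ultimately show ?thesis unfolding g'_def by linarith
      qed
    qed
    have netg': "\<And>x. net V g' x = net V g x + \<epsilon> * ((if w m = x then 1 else 0) - (if w 0 = x then 1 else 0))"
      unfolding g'_def net_lin net_walkf[OF V(1) wV] by simp
    have isf: "isflow V s t cap g'"
      unfolding isflow_def
    proof (intro conjI caps ballI)
      fix x assume x: "x \<in> V - {s, t}"
      then have "net V g x = 0" using fl unfolding isflow_def by blast
      then show "net V g' x = 0" using netg'[of x] x w0 wm by simp
    qed
    have "- net V g' s = - net V g s + \<epsilon>" using netg'[of s] w0 wm V(4) by simp
    moreover have "- net V g' s \<le> - net V g s" using mx isf by blast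
    ultimately have "- net V g s + \<epsilon> \<le> - net V g s" by simp
    then show ?thesis using \<epsilon>pos by simp
  next
    case False
    have noRes: "\<And>i j. i \<in> S \<Longrightarrow> j \<in> V - S \<Longrightarrow> (i, j) \<notin> Res"
    proof
      fix i j assume "i \<in> S" "j \<in> V - S" "(i, j) \<in> Res"
      then have "(s, j) \<in> Res\<^sup>*" unfolding S_def by (meson mem_Collect_eq rtrancl.rtrancl_into_rtrancl)
      then show False using \<open>j \<in> V - S\<close> S_def by auto
    qed
    have e1: "\<And>i j. i \<in> S \<Longrightarrow> j \<in> V - S \<Longrightarrow> g i j = cap i j"
    proof -
      fix i j assume ij: "i \<in> S" "j \<in> V - S"
      then have "\<not> g i j < cap i j" using noRes[OF ij] SV unfolding Res_def by auto
      moreover have "g i j \<le> cap i j" using fl ij SV unfolding isflow_def by auto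
      ultimately show "g i j = cap i j" by simp
    qed
    have e2: "\<And>i j. i \<in> V - S \<Longrightarrow> j \<in> S \<Longrightarrow> g i j = 0"
    proof -
      fix i j assume ij: "i \<in> V - S" "j \<in> S"
      then have "\<not> 0 < g i j" using noRes[OF ij(2) ij(1)] SV unfolding Res_def by auto
      moreover have "0 \<le> g i j" using fl ij SV unfolding isflow_def by auto
      ultimately show "g i j = 0" by simp
    qed
    have "- net V g s = (\<Sum>i\<in>S. \<Sum>j\<in>V - S. g i j) - (\<Sum>i\<in>V - S. \<Sum>j\<in>S. g i j)"
      using fl False SV by (intro cut_lemma[OF V(1) SV sS]) (auto simp: isflow_def)
    also have "\<dots> = (\<Sum>i\<in>S. \<Sum>j\<in>V - S. cap i j)" using e1 e2 by simp
    finally show ?thesis using sS SV False by blast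
  qed
qed

lemma maxflow_exists:
  assumes V: "finite V" "s \<in> V" "t \<in> V" "s \<noteq> t" and capnn: "\<forall>u\<in>V. \<forall>v\<in>V. cap u v \<ge> 0"
  shows "\<exists>g. isflow V s t cap g \<and> (\<forall>g'. isflow V s t cap g' \<longrightarrow> - net V g' s \<le> - net V g s)"
proof -
  define Vals where "Vals = {- net V g s | g. isflow V s t cap g}"
  define B where "B = (\<Sum>v\<in>V. cap s v)"
  have bnd: "\<And>g. isflow V s t cap g \<Longrightarrow> - net V g s \<le> B"
  proof -
    fix g assume g: "isflow V s t cap g"
    have "- net V g s = (\<Sum>v\<in>V. g s v) - (\<Sum>u\<in>V. g u s)" by (simp add: net_def)
    also have "\<dots> \<le> (\<Sum>v\<in>V. g s v)" using g V(2) by (simp add: isflow_def sum_nonneg)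
    also have "\<dots> \<le> B" unfolding B_def using g V(2) by (intro sum_mono) (auto simp: isflow_def)
    finally show "- net V g s \<le> B" .
  qed
  have zflow: "isflow V s t cap (\<lambda>_ _. 0)" using capnn by (simp add: isflow_def net_def)
  have ne: "Vals \<noteq> {}" unfolding Vals_def using zflow by blast
  have bdd: "bdd_above Vals" unfolding Vals_def by (rule bdd_aboveI[of _ B]) (use bnd in auto)
  define M where "M = Sup Vals"
  have "\<forall>n. \<exists>g. isflow V s t cap g \<and> M - inverse (real (Suc n)) < - net V g s"
  proof
    fix n
    have "M - inverse (real (Suc n)) < M" by simp
    then obtain x where "x \<in> Vals" "M - inverse (real (Suc n)) < x"
      using less_cSup_iff[OF ne bdd] unfolding M_def by blast
    then show "\<exists>g. isflow V s t cap g \<and> M - inverse (real (Suc n)) < - net V g s"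
      unfolding Vals_def by blast
  qed
  then obtain gs where gs: "\<And>n. isflow V s t cap (gs n)" "\<And>n. M - inverse (real (Suc n)) < - net V (gs n) s"
    by metis
  define Cm where "Cm = (\<Sum>p\<in>V \<times> V. cap (fst p) (snd p))"
  have "\<forall>n. \<forall>p\<in>V \<times> V. \<bar>gs n (fst p) (snd p)\<bar> \<le> Cm"
  proof (intro allI ballI)
    fix n p assume p: "p \<in> V \<times> V"
    have "\<bar>gs n (fst p) (snd p)\<bar> \<le> cap (fst p) (snd p)" using gs(1)[of n] p unfolding isflow_def by auto
    also have "\<dots> \<le> Cm" unfolding Cm_def using V(1) p capnn
      by (intro member_le_sum) auto
    finally show "\<bar>gs n (fst p) (snd p)\<bar> \<le> Cm" .
  qed
  then obtain r L where rL: "strict_mono r" "\<forall>p\<in>V \<times> V. (\<lambda>n. gs (r n) (fst p) (snd p)) \<longlonglongrightarrow> L p"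
    using bw_finite[of "V \<times> V" "\<lambda>n p. gs n (fst p) (snd p)" Cm] V(1) by blast
  define g where "g = (\<lambda>u v. L (u, v))"
  have conv: "\<And>u v. u \<in> V \<Longrightarrow> v \<in> V \<Longrightarrow> (\<lambda>n. gs (r n) u v) \<longlonglongrightarrow> g u v"
    using rL(2) unfolding g_def by force
  have netconv: "\<And>x. x \<in> V \<Longrightarrow> (\<lambda>n. net V (gs (r n)) x) \<longlonglongrightarrow> net V g x"
    unfolding net_def by (intro tendsto_intros conv) auto
  have "isflow V s t cap g"
    unfolding isflow_def
  proof (intro conjI ballI)
    fix u v assume uv: "u \<in> V" "v \<in> V"
    show "0 \<le> g u v" using conv[OF uv] gs(1) uv unfolding isflow_def
      by (intro LIMSEQ_le_const[of "\<lambda>n. gs (r n) u v"]) auto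
    show "g u v \<le> cap u v" using conv[OF uv] gs(1) uv unfolding isflow_def
      by (intro LIMSEQ_le_const2[of "\<lambda>n. gs (r n) u v"]) auto
  next
    fix x assume x: "x \<in> V - {s, t}"
    have "(\<lambda>n. net V (gs (r n)) x) = (\<lambda>n. 0)" using gs(1) x unfolding isflow_def by auto
    then have "(\<lambda>n. 0) \<longlonglongrightarrow> net V g x" using netconv[of x] x by simp
    then show "net V g x = 0" using LIMSEQ_unique tendsto_const by blast
  qed
  moreover have "- net V g s = M"
  proof (rule antisym)
    show "- net V g s \<le> M" unfolding M_def Vals_def
      using \<open>isflow V s t cap g\<close> bdd Vals_def by (intro cSup_upper) auto
    have lim1: "(\<lambda>n. M - inverse (real (Suc n))) \<longlonglongrightarrow> M"
      using tendsto_diff[OF tendsto_const LIMSEQ_inverse_real_of_nat] by simp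
    have lim2: "(\<lambda>n. - net V (gs (r n)) s) \<longlonglongrightarrow> - net V g s"
      using netconv[OF V(2)] by (rule tendsto_minus)
    have "\<forall>n. M - inverse (real (Suc n)) \<le> - net V (gs (r n)) s"
    proof
      fix n
      have "n \<le> r n" using rL(1) by (rule seq_suble)
      then have "inverse (real (Suc (r n))) \<le> inverse (real (Suc n))"
        by (simp add: le_imp_inverse_le)
      then show "M - inverse (real (Suc n)) \<le> - net V (gs (r n)) s" using gs(2)[of "r n"] by linarith
    qed
    then show "M \<le> - net V g s" using lim1 lim2 by (intro LIMSEQ_le) auto
  qed
  moreover have "\<forall>g'. isflow V s t cap g' \<longrightarrow> - net V g' s \<le> M"
    unfolding M_def Vals_def using bdd Vals_def by (auto intro: cSup_upper)
  ultimately show ?thesis by auto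
qed


definition uses :: "nat list \<Rightarrow> nat \<Rightarrow> nat \<Rightarrow> bool" where
  "uses p u v \<longleftrightarrow> (\<exists>k. Suc k < length p \<and> p ! k = u \<and> p ! Suc k = v)"

lemma walkf_path:
  assumes "distinct p"
  shows "walkf (\<lambda>_. True) (\<lambda>k. p ! k) (length p - 1) u v = (if uses p u v then 1 else 0)"
proof -
  have "walkf (\<lambda>_. True) (\<lambda>k. p ! k) (length p - 1) u v
      = (\<Sum>k<length p - 1. if p ! k = u \<and> p ! Suc k = v then 1 else 0)"
    unfolding walkf_def stepf_def by simp
  also have "\<dots> = (\<Sum>k\<in>{k\<in>{..<length p - 1}. p ! k = u \<and> p ! Suc k = v}. 1)"
    by (rule sum.inter_filter[symmetric]) simp
  also have "\<dots> = (if uses p u v then 1 else 0)"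
  proof (cases "uses p u v")
    case True
    then obtain k0 where k0: "Suc k0 < length p" "p ! k0 = u" "p ! Suc k0 = v" unfolding uses_def by blast
    have "{k\<in>{..<length p - 1}. p ! k = u \<and> p ! Suc k = v} = {k0}"
    proof (rule set_eqI, rule iffI)
      fix k assume "k \<in> {k\<in>{..<length p - 1}. p ! k = u \<and> p ! Suc k = v}"
      then have "k < length p" "p ! k = p ! k0" using k0 by auto
      then have "k = k0" using k0(1) assms nth_eq_iff_index_eq by fastforce
      then show "k \<in> {k0}" by simp
    next
      fix k assume "k \<in> {k0}" then show "k \<in> {k\<in>{..<length p - 1}. p ! k = u \<and> p ! Suc k = v}"
        using k0 by auto
    qed
    then show ?thesis using True by simp
  next
    case False
    then have "{k\<in>{..<length p - 1}. p ! k = u \<and> p ! Suc k = v} = {}" unfolding uses_def by auto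
    then show ?thesis using False by simp
  qed
  finally show ?thesis .
qed

lemma decompose:
  assumes V: "finite V" "s \<in> V" "t \<in> V" "s \<noteq> t"
    and nn: "\<forall>u\<in>V. \<forall>v\<in>V. 0 \<le> g u v" and cons: "\<forall>x\<in>V - {s, t}. net V g x = 0"
  shows "\<exists>P a. finite P \<and> (\<forall>p\<in>P. distinct p \<and> p \<noteq> [] \<and> hd p = s \<and> last p = t \<and>
      (\<forall>k. Suc k < length p \<longrightarrow> p ! k \<in> V \<and> p ! Suc k \<in> V \<and> 0 < g (p ! k) (p ! Suc k)) \<and> 0 \<le> a p) \<and>
      - net V g s \<le> (\<Sum>p\<in>P. a p) \<and>
      (\<forall>u\<in>V. \<forall>v\<in>V. (\<Sum>p\<in>{p\<in>P. uses p u v}. a p) \<le> g u v)"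
  using nn cons
proof (induction "card {(u,v). u \<in> V \<and> v \<in> V \<and> g u v \<noteq> 0}" arbitrary: g rule: less_induct)
  case less
  note IH = less.hyps
  show ?case
  proof (cases "- net V g s \<le> 0")
    case True
    then show ?thesis using less.prems(1) by (intro exI[of _ "{}"]) auto
  next
    case False
    define Pos where "Pos = {(u,v). u \<in> V \<and> v \<in> V \<and> 0 < g u v}"
    define T where "T = {x. (s, x) \<in> Pos\<^sup>*}"
    have sT: "s \<in> T" unfolding T_def by simp
    have TV: "T \<subseteq> V"
    proof
      fix x assume "x \<in> T"
      then have "(s, x) \<in> Pos\<^sup>*" unfolding T_def by simp
      then show "x \<in> V" by (cases rule: rtranclE) (use V(2) Pos_def in auto)
    qed
    have tT: "t \<in> T"
    proof (rule ccontr)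
      assume tn: "t \<notin> T"
      have z: "\<And>i j. i \<in> T \<Longrightarrow> j \<in> V - T \<Longrightarrow> g i j = 0"
      proof -
        fix i j assume ij: "i \<in> T" "j \<in> V - T"
        have "\<not> 0 < g i j"
        proof
          assume "0 < g i j"
          then have "(i, j) \<in> Pos" using ij TV unfolding Pos_def by auto
          then have "(s, j) \<in> Pos\<^sup>*" using ij(1) unfolding T_def by (simp add: rtrancl.rtrancl_into_rtrancl)
          then show False using ij(2) T_def by auto
        qed
        then show "g i j = 0" using less.prems(1) ij TV by force
      qed
      have "- net V g s = (\<Sum>i\<in>T. \<Sum>j\<in>V - T. g i j) - (\<Sum>i\<in>V - T. \<Sum>j\<in>T. g i j)"
        using less.prems(2) tn TV by (intro cut_lemma[OF V(1) TV sT]) auto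
      also have "\<dots> = - (\<Sum>i\<in>V - T. \<Sum>j\<in>T. g i j)" using z by simp
      also have "\<dots> \<le> 0"
      proof -
        have "0 \<le> (\<Sum>i\<in>V - T. \<Sum>j\<in>T. g i j)" using less.prems(1) TV by (intro sum_nonneg) blast
        then show ?thesis by simp
      qed
      finally show False using False by simp
    qed
    then have st: "(s, t) \<in> Pos\<^sup>*" unfolding T_def by simp
    obtain p where p0: "distinct p \<and> p \<noteq> [] \<and> hd p = s \<and> last p = t \<and>
      (\<forall>k. Suc k < length p \<longrightarrow> (p ! k, p ! Suc k) \<in> Pos)"
      using rtrancl_distinct_path[OF st] by (elim exE) simp
    then have p: "distinct p" "p \<noteq> []" "hd p = s" "last p = t"
      "\<forall>k. Suc k < length p \<longrightarrow> (p ! k, p ! Suc k) \<in> Pos" by blast+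
    define m where "m = length p - 1"
    define w where "w = (\<lambda>k. p ! k)"
    have w0: "w 0 = s" using p(2,3) unfolding w_def by (simp add: hd_conv_nth)
    have wm: "w m = t" using p(2,4) unfolding w_def m_def by (simp add: last_conv_nth)
    have m1: "m \<ge> 1" using w0 wm V(4) by (cases m) auto
    have stepP: "\<And>k. k < m \<Longrightarrow> (w k, w (Suc k)) \<in> Pos" using p(5) unfolding w_def m_def by auto
    have wV: "\<forall>k\<le>m. w k \<in> V"
    proof (intro allI impI)
      fix k assume "k \<le> m"
      then show "w k \<in> V"
      proof (cases "k = m")
        case True then show ?thesis using wm V(3) by simp
      next
        case False then show ?thesis using stepP[of k] \<open>k \<le> m\<close> Pos_def by auto
      qed
    qed
    define \<delta> where "\<delta> = Min ((\<lambda>k. g (w k) (w (Suc k))) ` {..<m})"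
    have \<delta>in: "\<delta> \<in> (\<lambda>k. g (w k) (w (Suc k))) ` {..<m}" unfolding \<delta>_def using m1
      by (intro Min_in) (auto simp: lessThan_empty_iff)
    then obtain k0 where k0: "k0 < m" "\<delta> = g (w k0) (w (Suc k0))" by auto
    have \<delta>pos: "\<delta> > 0" using k0 stepP[of k0] unfolding Pos_def by auto
    have \<delta>le: "\<And>k. k < m \<Longrightarrow> \<delta> \<le> g (w k) (w (Suc k))" unfolding \<delta>_def by simp
    define g' where "g' = (\<lambda>u v. g u v + (- \<delta>) * walkf (\<lambda>_. True) w m u v)"
    have wf: "\<And>u v. walkf (\<lambda>_. True) w m u v = (if uses p u v then 1 else 0)"
      unfolding w_def m_def by (rule walkf_path[OF p(1)])
    have usesle: "\<And>u v. uses p u v \<Longrightarrow> \<delta> \<le> g u v"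
    proof -
      fix u v assume "uses p u v"
      then obtain k where "Suc k < length p" "p ! k = u" "p ! Suc k = v" unfolding uses_def by blast
      then show "\<delta> \<le> g u v" using \<delta>le[of k] unfolding w_def m_def by auto
    qed
    have g'eq: "\<And>u v. g' u v = (if uses p u v then g u v - \<delta> else g u v)"
      unfolding g'_def wf by simp
    have nn': "\<forall>u\<in>V. \<forall>v\<in>V. 0 \<le> g' u v" using less.prems(1) usesle unfolding g'eq by force
    have netg': "\<And>x. net V g' x = net V g x + (- \<delta>) * ((if w m = x then 1 else 0) - (if w 0 = x then 1 else 0))"
      unfolding g'_def net_lin net_walkf[OF V(1) wV] by simp
    have cons': "\<forall>x\<in>V - {s, t}. net V g' x = 0"
    proof
      fix x assume x: "x \<in> V - {s, t}"
      then have "net V g x = 0" using less.prems(2) by blast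
      then show "net V g' x = 0" using netg'[of x] x w0 wm by simp
    qed
    have val': "- net V g' s = - net V g s - \<delta>" using netg'[of s] w0 wm V(4) by simp
    have supp: "{(u,v). u \<in> V \<and> v \<in> V \<and> g' u v \<noteq> 0} \<subset> {(u,v). u \<in> V \<and> v \<in> V \<and> g u v \<noteq> 0}"
    proof
      show "{(u,v). u \<in> V \<and> v \<in> V \<and> g' u v \<noteq> 0} \<subseteq> {(u,v). u \<in> V \<and> v \<in> V \<and> g u v \<noteq> 0}"
        using \<delta>pos unfolding g'eq by (auto split: if_splits dest!: usesle)
      have k0V: "w k0 \<in> V" "w (Suc k0) \<in> V" using wV k0(1) by auto
      have "uses p (w k0) (w (Suc k0))" unfolding uses_def w_def using k0(1) m_def by (intro exI[of _ k0]) auto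
      then have "g' (w k0) (w (Suc k0)) = 0" using k0(2) unfolding g'eq by simp
      moreover have "g (w k0) (w (Suc k0)) \<noteq> 0" using k0(2) \<delta>pos by simp
      ultimately show "{(u,v). u \<in> V \<and> v \<in> V \<and> g' u v \<noteq> 0} \<noteq> {(u,v). u \<in> V \<and> v \<in> V \<and> g u v \<noteq> 0}"
        using k0V by blast
    qed
    have "finite {(u,v). u \<in> V \<and> v \<in> V \<and> g u v \<noteq> 0}"
      by (rule finite_subset[of _ "V \<times> V"]) (use V(1) in auto)
    then have "card {(u,v). u \<in> V \<and> v \<in> V \<and> g' u v \<noteq> 0} < card {(u,v). u \<in> V \<and> v \<in> V \<and> g u v \<noteq> 0}"
      using supp by (rule psubset_card_mono)
    then obtain P' a' where P': "finite P'" "\<forall>p\<in>P'. distinct p \<and> p \<noteq> [] \<and> hd p = s \<and> last p = t \<and>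
      (\<forall>k. Suc k < length p \<longrightarrow> p ! k \<in> V \<and> p ! Suc k \<in> V \<and> 0 < g' (p ! k) (p ! Suc k)) \<and> 0 \<le> a' p"
      "- net V g' s \<le> (\<Sum>p\<in>P'. a' p)"
      "\<forall>u\<in>V. \<forall>v\<in>V. (\<Sum>p\<in>{p\<in>P'. uses p u v}. a' p) \<le> g' u v"
      using IH[of g'] nn' cons' by blast
    define P where "P = insert p P'"
    define a where "a = (\<lambda>q. (if q \<in> P' then a' q else 0) + (if q = p then \<delta> else 0))"
    have g'leg: "\<And>u v. g' u v \<le> g u v" using \<delta>pos unfolding g'eq by simp
    have "finite P" using P'(1) P_def by simp
    moreover have "\<forall>q\<in>P. distinct q \<and> q \<noteq> [] \<and> hd q = s \<and> last q = t \<and>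
      (\<forall>k. Suc k < length q \<longrightarrow> q ! k \<in> V \<and> q ! Suc k \<in> V \<and> 0 < g (q ! k) (q ! Suc k)) \<and> 0 \<le> a q"
    proof
      fix q assume q: "q \<in> P"
      show "distinct q \<and> q \<noteq> [] \<and> hd q = s \<and> last q = t \<and>
        (\<forall>k. Suc k < length q \<longrightarrow> q ! k \<in> V \<and> q ! Suc k \<in> V \<and> 0 < g (q ! k) (q ! Suc k)) \<and> 0 \<le> a q"
      proof (cases "q = p")
        case True
        have "\<forall>k. Suc k < length q \<longrightarrow> q ! k \<in> V \<and> q ! Suc k \<in> V \<and> 0 < g (q ! k) (q ! Suc k)"
          using p(5) True unfolding Pos_def by auto
        moreover have "0 \<le> a q" unfolding a_def using True P'(2) \<delta>pos by auto
        ultimately show ?thesis using p True by blast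
      next
        case False
        then have qP': "q \<in> P'" using q P_def by auto
        have "\<forall>k. Suc k < length q \<longrightarrow> q ! k \<in> V \<and> q ! Suc k \<in> V \<and> 0 < g (q ! k) (q ! Suc k)"
          using P'(2) qP' g'leg by (meson order_less_le_trans)
        moreover have "0 \<le> a q" unfolding a_def using False qP' P'(2) by auto
        ultimately show ?thesis using P'(2) qP' by blast
      qed
    qed
    moreover have "- net V g s \<le> (\<Sum>q\<in>P. a q)"
    proof -
      have "(\<Sum>q\<in>P. a q) = (\<Sum>q\<in>{q\<in>insert p P'. True}. (if q \<in> P' then a' q else 0) + (if q = p then \<delta> else 0))"
        unfolding P_def a_def by (rule sum.cong) auto
      also have "\<dots> = (\<Sum>q\<in>{q\<in>P'. True}. a' q) + (if True then \<delta> else 0)"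
        by (rule sum_insert_extra[OF P'(1)])
      finally show ?thesis using P'(3) val' by simp
    qed
    moreover have "\<forall>u\<in>V. \<forall>v\<in>V. (\<Sum>q\<in>{q\<in>P. uses q u v}. a q) \<le> g u v"
    proof (intro ballI)
      fix u v assume uv: "u \<in> V" "v \<in> V"
      have "(\<Sum>q\<in>{q\<in>P. uses q u v}. a q) = (\<Sum>q\<in>{q\<in>P'. uses q u v}. a' q) + (if uses p u v then \<delta> else 0)"
        unfolding P_def a_def by (rule sum_insert_extra[OF P'(1)])
      also have "\<dots> \<le> g' u v + (if uses p u v then \<delta> else 0)" using P'(4) uv by auto
      also have "\<dots> = g u v" unfolding g'eq by simp
      finally show "(\<Sum>q\<in>{q\<in>P. uses q u v}. a q) \<le> g u v" .
    qed
    ultimately show ?thesis by blast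
  qed
qed


lemma finite_fun_sets:
  assumes "finite X"
  shows "finite {f :: nat \<Rightarrow> nat set. (\<forall>i. f i \<subseteq> X) \<and> (\<forall>i > K. f i = {})}"
proof -
  define G where "G = (\<lambda>f :: nat \<Rightarrow> nat set. {(i,j). j \<in> f i})"
  have inj: "inj G" unfolding G_def inj_def by (auto simp: fun_eq_iff)
  have "G ` {f. (\<forall>i. f i \<subseteq> X) \<and> (\<forall>i > K. f i = {})} \<subseteq> Pow ({..K} \<times> X)"
    unfolding G_def by (auto simp: not_le[symmetric])
  moreover have "finite (Pow ({..K} \<times> X))" using assms by simp
  ultimately have "finite (G ` {f. (\<forall>i. f i \<subseteq> X) \<and> (\<forall>i > K. f i = {})})"
    by (rule finite_subset)
  then show ?thesis by (rule finite_imageD) (rule inj_on_subset[OF inj subset_UNIV])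
qed

lemma fd_statesD:
  assumes "(st, sr) \<in> fd_states N"
  shows "\<And>i. i \<le> N + 1 \<Longrightarrow> st i \<subseteq> {1..N+1} - {i}"
    "\<And>i. i \<le> N + 1 \<Longrightarrow> sr i \<subseteq> {0..N} - {i}"
    "\<And>i. i \<le> N + 1 \<Longrightarrow> card (st i) \<le> 1"
    "\<And>i. i \<le> N + 1 \<Longrightarrow> card (sr i) \<le> 1"
    "\<And>i. i > N + 1 \<Longrightarrow> st i = {}"
    "\<And>i. i > N + 1 \<Longrightarrow> sr i = {}"
proof -
  have h: "(\<forall>i \<le> N + 1. st i \<subseteq> {1..N+1} - {i} \<and> card (st i) \<le> 1 \<and>
                    sr i \<subseteq> {0..N} - {i} \<and> card (sr i) \<le> 1) \<and>
      (\<forall>i > N + 1. st i = {} \<and> sr i = {})"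
    using assms unfolding fd_states_def by simp
  show "\<And>i. i \<le> N + 1 \<Longrightarrow> st i \<subseteq> {1..N+1} - {i}"
    "\<And>i. i \<le> N + 1 \<Longrightarrow> sr i \<subseteq> {0..N} - {i}"
    "\<And>i. i \<le> N + 1 \<Longrightarrow> card (st i) \<le> 1"
    "\<And>i. i \<le> N + 1 \<Longrightarrow> card (sr i) \<le> 1"
    "\<And>i. i > N + 1 \<Longrightarrow> st i = {}"
    "\<And>i. i > N + 1 \<Longrightarrow> sr i = {}"
    using h by blast+
qed

lemma fd_states_sub:
  assumes "(st, sr) \<in> fd_states N"
  shows "st i \<subseteq> {0..N+1}" "sr i \<subseteq> {0..N+1}"
proof -
  have "st i \<subseteq> {0..N+1} \<and> sr i \<subseteq> {0..N+1}"
  proof (cases "i \<le> N + 1")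
    case True
    then show ?thesis using fd_statesD(1,2)[OF assms True] by auto
  next
    case False
    then show ?thesis using fd_statesD(5,6)[OF assms, of i] by simp
  qed
  then show "st i \<subseteq> {0..N+1}" "sr i \<subseteq> {0..N+1}" by auto
qed

lemma finite_fd_states: "finite (fd_states N)"
proof -
  define A where "A = {f :: nat \<Rightarrow> nat set. (\<forall>i. f i \<subseteq> {0..N+1}) \<and> (\<forall>i > N + 1. f i = {})}"
  have "finite A" unfolding A_def by (rule finite_fun_sets) simp
  moreover have "fd_states N \<subseteq> A \<times> A"
  proof
    fix s assume s: "s \<in> fd_states N"
    obtain st sr where ss: "s = (st, sr)" by (cases s)
    have s': "(st, sr) \<in> fd_states N" using s ss by simp
    have "st \<in> A" unfolding A_def using fd_states_sub(1)[OF s'] fd_statesD(5)[OF s'] by blast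
    moreover have "sr \<in> A" unfolding A_def using fd_states_sub(2)[OF s'] fd_statesD(6)[OF s'] by blast
    ultimately show "s \<in> A \<times> A" using ss by simp
  qed
  moreover have "finite (A \<times> A)" using \<open>finite A\<close> by simp
  ultimately show ?thesis using finite_subset by blast
qed

lemma empty_state: "((\<lambda>_. {}), (\<lambda>_. {})) \<in> fd_states N"
  unfolding fd_states_def by auto

lemma finite_cuts: "finite (cuts N)"
  unfolding cuts_def by (rule finite_subset[of _ "Pow {0..N}"]) auto

lemma cuts_ne: "{0} \<in> cuts N"
  unfolding cuts_def by auto

lemma nx_eq:
  assumes "distinct p" "Suc k < length p"
  shows "nx p (p ! k) = p ! Suc k"
  unfolding nx_def
proof (rule the_equality)
  show "\<exists>k'. Suc k' < length p \<and> p ! k' = p ! k \<and> p ! Suc k' = p ! Suc k" using assms by blast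
next
  fix j assume "\<exists>k'. Suc k' < length p \<and> p ! k' = p ! k \<and> p ! Suc k' = j"
  then obtain k' where k': "Suc k' < length p" "p ! k' = p ! k" "p ! Suc k' = j" by blast
  then have "k' = k" using assms nth_eq_iff_index_eq by fastforce
  then show "j = p ! Suc k" using k' by simp
qed

lemma pr_eq:
  assumes "distinct p" "Suc k < length p"
  shows "pr p (p ! Suc k) = p ! k"
  unfolding pr_def
proof (rule the_equality)
  show "\<exists>k'. Suc k' < length p \<and> p ! k' = p ! k \<and> p ! Suc k' = p ! Suc k" using assms by blast
next
  fix j assume "\<exists>k'. Suc k' < length p \<and> p ! k' = j \<and> p ! Suc k' = p ! Suc k"
  then obtain k' where k': "Suc k' < length p" "p ! k' = j" "p ! Suc k' = p ! Suc k" by blast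
  then have "k' = k" using assms nth_eq_iff_index_eq by fastforce
  then show "j = p ! k" using k' by simp
qed

context
  fixes N :: nat and E :: "(nat \<times> nat) set" and ell :: "nat \<Rightarrow> nat \<Rightarrow> real"
  assumes vn: "valid_network N E ell"
begin

lemma E_sub: "(i, j) \<in> E \<Longrightarrow> i \<le> N \<and> 1 \<le> j \<and> j \<le> N + 1 \<and> i \<noteq> j"
  using vn unfolding valid_network_def by auto

lemma ell_pos: "(i, j) \<in> E \<Longrightarrow> ell j i > 0"
  using vn unfolding valid_network_def by auto

lemma ell_zero: "(i, j) \<notin> E \<Longrightarrow> ell j i = 0"
  using vn unfolding valid_network_def by auto

lemma ell_nn: "ell j i \<ge> 0"
  using ell_pos ell_zero by (cases "(i,j) \<in> E") (auto intro: less_imp_le)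

lemma path_props:
  assumes "p \<in> paths N E"
  shows "distinct p" "p \<noteq> []" "hd p = 0" "last p = N + 1"
    "\<And>k. Suc k < length p \<Longrightarrow> (p ! k, p ! Suc k) \<in> E"
  using assms unfolding paths_def by auto

lemma path_set:
  assumes "p \<in> paths N E"
  shows "set p \<subseteq> {0..N+1}"
proof
  fix x assume "x \<in> set p"
  then obtain k where k: "k < length p" "p ! k = x" by (auto simp: in_set_conv_nth)
  show "x \<in> {0..N+1}"
  proof (cases "Suc k < length p")
    case True then show ?thesis using path_props(5)[OF assms True] E_sub k by fastforce
  next
    case False
    then have "k = length p - 1" using k by simp
    then have "x = last p" using k path_props(2)[OF assms] by (simp add: last_conv_nth)
    then show ?thesis using path_props(4)[OF assms] by simp
  qed
qed

lemma finite_paths: "finite (paths N E)"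
proof -
  have "paths N E \<subseteq> {xs. set xs \<subseteq> {0..N+1} \<and> length xs \<le> card {0..N+1::nat}}"
  proof
    fix p assume p: "p \<in> paths N E"
    have "length p = card (set p)" using path_props(1)[OF p] by (simp add: distinct_card)
    also have "\<dots> \<le> card {0..N+1}" using path_set[OF p] by (intro card_mono) auto
    finally show "p \<in> {xs. set xs \<subseteq> {0..N+1} \<and> length xs \<le> card {0..N+1::nat}}" using path_set[OF p] by simp
  qed
  then show ?thesis by (rule finite_subset) (rule finite_lists_length_le, simp)
qed

lemma path_len:
  assumes "p \<in> paths N E"
  shows "Suc 0 < length p"
proof (rule ccontr)
  assume "\<not> Suc 0 < length p"
  then have "length p = 1" using path_props(2)[OF assms] by (cases p) auto
  then have "hd p = last p" by (cases p) auto
  then show False using path_props(3,4)[OF assms] by simp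
qed

lemma path_cap_pos:
  assumes "p \<in> paths N E"
  shows "path_cap ell p > 0"
proof -
  have fin: "finite {ell (p ! Suc k) (p ! k) | k. Suc k < length p}"
    by (rule finite_subset[of _ "(\<lambda>k. ell (p ! Suc k) (p ! k)) ` {..<length p}"]) auto
  have ne: "{ell (p ! Suc k) (p ! k) | k. Suc k < length p} \<noteq> {}" using path_len[OF assms] by auto
  have "path_cap ell p \<in> {ell (p ! Suc k) (p ! k) | k. Suc k < length p}"
    unfolding path_cap_def using fin ne by (rule Min_in)
  then show ?thesis using ell_pos path_props(5)[OF assms] by auto
qed

lemma uses_E:
  assumes "p \<in> paths N E" "uses p i j"
  shows "(i, j) \<in> E"
  using assms path_props(5)[OF assms(1)] unfolding uses_def by auto

lemma uses_out:
  assumes "p \<in> paths N E" "i \<le> N"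
  shows "{j \<in> {0..N+1}. uses p i j} = (if i \<in> set p then {nx p i} else {})"
proof (cases "i \<in> set p")
  case True
  then obtain k where k: "k < length p" "p ! k = i" by (auto simp: in_set_conv_nth)
  have "Suc k < length p"
  proof (rule ccontr)
    assume "\<not> Suc k < length p"
    then have "k = length p - 1" using k by simp
    then have "i = last p" using k path_props(2)[OF assms(1)] by (simp add: last_conv_nth)
    then show False using path_props(4)[OF assms(1)] assms(2) by simp
  qed
  then have nxe: "nx p i = p ! Suc k" using nx_eq[OF path_props(1)[OF assms(1)] \<open>Suc k < length p\<close>] k by simp
  have "{j \<in> {0..N+1}. uses p i j} = {nx p i}"
  proof (rule set_eqI, rule iffI)
    fix j assume "j \<in> {j \<in> {0..N+1}. uses p i j}"
    then obtain k' where k': "Suc k' < length p" "p ! k' = i" "p ! Suc k' = j" unfolding uses_def by blast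
    then show "j \<in> {nx p i}" using nx_eq[OF path_props(1)[OF assms(1)] k'(1)] by simp
  next
    fix j assume "j \<in> {nx p i}"
    then have "j = p ! Suc k" using nxe by simp
    moreover have "p ! Suc k \<in> {0..N+1}"
    proof -
      have "p ! Suc k \<in> set p" using \<open>Suc k < length p\<close> by simp
      then show ?thesis using path_set[OF assms(1)] by blast
    qed
    ultimately show "j \<in> {j \<in> {0..N+1}. uses p i j}" using \<open>Suc k < length p\<close> k unfolding uses_def by auto
  qed
  then show ?thesis using True by simp
next
  case False
  have "\<And>i' j'. uses p i' j' \<Longrightarrow> i' \<in> set p \<and> j' \<in> set p"
    unfolding uses_def by (metis Suc_lessD nth_mem)
  then show ?thesis using False by auto
qed

lemma uses_in:
  assumes "p \<in> paths N E" "1 \<le> j"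
  shows "{i \<in> {0..N+1}. uses p i j} = (if j \<in> set p then {pr p j} else {})"
proof (cases "j \<in> set p")
  case True
  then obtain k where k: "k < length p" "p ! k = j" by (auto simp: in_set_conv_nth)
  have "k \<noteq> 0"
  proof
    assume "k = 0"
    then have "j = hd p" using k path_props(2)[OF assms(1)] by (simp add: hd_conv_nth)
    then show False using path_props(3)[OF assms(1)] assms(2) by simp
  qed
  then obtain k0 where k0: "k = Suc k0" by (cases k) auto
  then have pre1: "pr p j = p ! k0" using pr_eq[OF path_props(1)[OF assms(1)], of k0] k by simp
  have "{i \<in> {0..N+1}. uses p i j} = {pr p j}"
  proof (rule set_eqI, rule iffI)
    fix i assume "i \<in> {i \<in> {0..N+1}. uses p i j}"
    then obtain k' where k': "Suc k' < length p" "p ! k' = i" "p ! Suc k' = j" unfolding uses_def by blast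
    then show "i \<in> {pr p j}" using pr_eq[OF path_props(1)[OF assms(1)] k'(1)] by simp
  next
    fix i assume "i \<in> {pr p j}"
    then have "i = p ! k0" using pre1 by simp
    moreover have "p ! k0 \<in> {0..N+1}"
    proof -
      have "k0 < length p" using k k0 by simp
      then have "p ! k0 \<in> set p" by simp
      then show ?thesis using path_set[OF assms(1)] by blast
    qed
    ultimately show "i \<in> {i \<in> {0..N+1}. uses p i j}" using k k0 unfolding uses_def by auto
  qed
  then show ?thesis using True by simp
next
  case False
  have "\<And>i' j'. uses p i' j' \<Longrightarrow> i' \<in> set p \<and> j' \<in> set p"
    unfolding uses_def by (metis Suc_lessD nth_mem)
  then show ?thesis using False by auto
qed

end


definition yv :: "nat \<Rightarrow> (state \<Rightarrow> real) \<Rightarrow> nat \<Rightarrow> nat \<Rightarrow> real" where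
  "yv N lam i j = (\<Sum>s \<in> {s \<in> fd_states N. link_active s i j}. lam s)"

lemma cut_value_yv: "cut_value N ell lam \<Omega> = (\<Sum>i\<in>\<Omega>. \<Sum>j\<in>{0..N+1} - \<Omega>. yv N lam i j * ell j i)"
  unfolding cut_value_def yv_def by simp

lemma net_sum_set:
  assumes "finite V"
  shows "net V (\<lambda>u v. \<Sum>p\<in>P. c p * h p u v) x = (\<Sum>p\<in>P. c p * net V (h p) x)"
  unfolding net_def using assms
  by (simp add: sum.swap[of _ V] sum_subtractf sum_distrib_left right_diff_distrib)

lemma sum_single: "(\<Sum>x\<in>{b}\<times>A. f x) = (\<Sum>a\<in>A. f (b, a))"
proof -
  have "{b}\<times>A = Pair b ` A" by auto
  moreover have "inj_on (Pair b) A" by (auto simp: inj_on_def)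
  ultimately show ?thesis by (simp add: sum.reindex o_def)
qed

lemma sum_two_blocks:
  assumes "finite A" "finite B"
  shows "(\<Sum>x\<in>{False}\<times>A \<union> {True}\<times>B. f x) = (\<Sum>a\<in>A. f (False, a)) + (\<Sum>b\<in>B. f (True, b))"
proof -
  have "(\<Sum>x\<in>{False}\<times>A \<union> {True}\<times>B. f x) = (\<Sum>x\<in>{False}\<times>A. f x) + (\<Sum>x\<in>{True}\<times>B. f x)"
    using assms by (intro sum.union_disjoint) auto
  then show ?thesis by (simp add: sum_single)
qed

lemma prob_yv_le1:
  assumes "prob_vector N lam"
  shows "yv N lam i j \<le> 1" "0 \<le> yv N lam i j"
proof -
  have nn: "\<forall>s\<in>fd_states N. 0 \<le> lam s" using assms unfolding prob_vector_def by simp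
  have "yv N lam i j \<le> (\<Sum>s\<in>fd_states N. lam s)" unfolding yv_def
    using nn finite_fd_states by (intro sum_mono2) auto
  then show "yv N lam i j \<le> 1" using assms unfolding prob_vector_def by simp
  show "0 \<le> yv N lam i j" unfolding yv_def using nn by (intro sum_nonneg) auto
qed

lemma prob_out_le1:
  assumes "prob_vector N lam" "i \<le> N + 1"
  shows "(\<Sum>j\<in>{0..N+1}. yv N lam i j) \<le> 1"
proof -
  have nn: "\<forall>s\<in>fd_states N. 0 \<le> lam s" using assms unfolding prob_vector_def by simp
  have "(\<Sum>j\<in>{0..N+1}. yv N lam i j) = (\<Sum>s\<in>fd_states N. \<Sum>j\<in>{j\<in>{0..N+1}. link_active s i j}. lam s)"
    unfolding yv_def by (rule sum.swap_restrict) (auto simp: finite_fd_states)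
  also have "\<dots> \<le> (\<Sum>s\<in>fd_states N. lam s)"
  proof (rule sum_mono)
    fix s assume s: "s \<in> fd_states N"
    obtain st sr where ss: "s = (st, sr)" by (cases s)
    have s': "(st, sr) \<in> fd_states N" using s ss by simp
    have "{j\<in>{0..N+1}. link_active s i j} \<subseteq> st i" unfolding link_active_def ss by auto
    moreover have "finite (st i)" using fd_states_sub(1)[OF s'] by (rule finite_subset) simp
    ultimately have "card {j\<in>{0..N+1}. link_active s i j} \<le> card (st i)" by (rule card_mono[rotated])
    also have "\<dots> \<le> 1" using fd_statesD(3)[OF s' assms(2)] .
    finally have c: "card {j\<in>{0..N+1}. link_active s i j} \<le> 1" .
    have "(\<Sum>j\<in>{j\<in>{0..N+1}. link_active s i j}. lam s) = real (card {j\<in>{0..N+1}. link_active s i j}) * lam s"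
      by simp
    also have "\<dots> \<le> 1 * lam s" using c nn s by (intro mult_right_mono) auto
    finally show "(\<Sum>j\<in>{j\<in>{0..N+1}. link_active s i j}. lam s) \<le> lam s" by simp
  qed
  also have "\<dots> = 1" using assms unfolding prob_vector_def by simp
  finally show ?thesis .
qed

lemma prob_in_le1:
  assumes "prob_vector N lam" "j \<le> N + 1"
  shows "(\<Sum>i\<in>{0..N+1}. yv N lam i j) \<le> 1"
proof -
  have nn: "\<forall>s\<in>fd_states N. 0 \<le> lam s" using assms unfolding prob_vector_def by simp
  have "(\<Sum>i\<in>{0..N+1}. yv N lam i j) = (\<Sum>s\<in>fd_states N. \<Sum>i\<in>{i\<in>{0..N+1}. link_active s i j}. lam s)"
    unfolding yv_def by (rule sum.swap_restrict) (auto simp: finite_fd_states)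
  also have "\<dots> \<le> (\<Sum>s\<in>fd_states N. lam s)"
  proof (rule sum_mono)
    fix s assume s: "s \<in> fd_states N"
    obtain st sr where ss: "s = (st, sr)" by (cases s)
    have s': "(st, sr) \<in> fd_states N" using s ss by simp
    have "{i\<in>{0..N+1}. link_active s i j} \<subseteq> sr j" unfolding link_active_def ss by auto
    moreover have "finite (sr j)" using fd_states_sub(2)[OF s'] by (rule finite_subset) simp
    ultimately have "card {i\<in>{0..N+1}. link_active s i j} \<le> card (sr j)" by (rule card_mono[rotated])
    also have "\<dots> \<le> 1" using fd_statesD(4)[OF s' assms(2)] .
    finally have c: "card {i\<in>{0..N+1}. link_active s i j} \<le> 1" .
    have "(\<Sum>i\<in>{i\<in>{0..N+1}. link_active s i j}. lam s) = real (card {i\<in>{0..N+1}. link_active s i j}) * lam s"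
      by simp
    also have "\<dots> \<le> 1 * lam s" using c nn s by (intro mult_right_mono) auto
    finally show "(\<Sum>i\<in>{i\<in>{0..N+1}. link_active s i j}. lam s) \<le> lam s" by simp
  qed
  also have "\<dots> = 1" using assms unfolding prob_vector_def by simp
  finally show ?thesis .
qed

context
  fixes N :: nat and E :: "(nat \<times> nat) set" and ell :: "nat \<Rightarrow> nat \<Rightarrow> real"
  assumes vn: "valid_network N E ell"
begin

lemma reg_out:
  assumes "i \<le> N" "Pth \<subseteq> paths N E"
  shows "(\<Sum>p\<in>{p\<in>Pth. i \<in> set p}. G p (nx p i)) = (\<Sum>j\<in>{0..N+1}. \<Sum>p\<in>{p\<in>Pth. uses p i j}. G p j)"
proof -
  have fin: "finite Pth" using finite_paths[OF vn] assms(2) finite_subset by auto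
  have "(\<Sum>j\<in>{0..N+1}. \<Sum>p\<in>{p\<in>Pth. uses p i j}. G p j) = (\<Sum>p\<in>Pth. \<Sum>j\<in>{j\<in>{0..N+1}. uses p i j}. G p j)"
    by (rule sum.swap_restrict) (use fin in auto)
  also have "\<dots> = (\<Sum>p\<in>Pth. if i \<in> set p then G p (nx p i) else 0)"
  proof (rule sum.cong[OF refl])
    fix p assume "p \<in> Pth"
    then have "p \<in> paths N E" using assms(2) by auto
    then show "(\<Sum>j\<in>{j\<in>{0..N+1}. uses p i j}. G p j) = (if i \<in> set p then G p (nx p i) else 0)"
      using uses_out[OF vn _ assms(1)] by simp
  qed
  also have "\<dots> = (\<Sum>p\<in>{p\<in>Pth. i \<in> set p}. G p (nx p i))"
    by (rule sum.inter_filter[symmetric, OF fin])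
  finally show ?thesis by simp
qed

lemma reg_in:
  assumes "1 \<le> j" "Pth \<subseteq> paths N E"
  shows "(\<Sum>p\<in>{p\<in>Pth. j \<in> set p}. G p (pr p j)) = (\<Sum>i\<in>{0..N+1}. \<Sum>p\<in>{p\<in>Pth. uses p i j}. G p i)"
proof -
  have fin: "finite Pth" using finite_paths[OF vn] assms(2) finite_subset by auto
  have "(\<Sum>i\<in>{0..N+1}. \<Sum>p\<in>{p\<in>Pth. uses p i j}. G p i) = (\<Sum>p\<in>Pth. \<Sum>i\<in>{i\<in>{0..N+1}. uses p i j}. G p i)"
    by (rule sum.swap_restrict) (use fin in auto)
  also have "\<dots> = (\<Sum>p\<in>Pth. if j \<in> set p then G p (pr p j) else 0)"
  proof (rule sum.cong[OF refl])
    fix p assume "p \<in> Pth"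
    then have "p \<in> paths N E" using assms(2) by auto
    then show "(\<Sum>i\<in>{i\<in>{0..N+1}. uses p i j}. G p i) = (if j \<in> set p then G p (pr p j) else 0)"
      using uses_in[OF vn _ assms(1)] by simp
  qed
  also have "\<dots> = (\<Sum>p\<in>{p\<in>Pth. j \<in> set p}. G p (pr p j))"
    by (rule sum.inter_filter[symmetric, OF fin])
  finally show ?thesis by simp
qed

lemma path_net:
  assumes "p \<in> paths N E"
  shows "net {0..N+1} (\<lambda>u v. if uses p u v then 1 else 0) x = (if x = N + 1 then 1 else 0) - (if x = 0 then 1 else 0)"
proof -
  have d: "distinct p" and ne: "p \<noteq> []" using path_props[OF vn assms] by auto
  have "(\<lambda>u v. if uses p u v then 1 else 0) = walkf (\<lambda>_. True) (\<lambda>k. p ! k) (length p - 1)"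
    using walkf_path[OF d] by (simp add: fun_eq_iff)
  moreover have "\<forall>k\<le>length p - 1. p ! k \<in> {0..N+1}"
  proof (intro allI impI)
    fix k assume "k \<le> length p - 1"
    then have "k < length p" using ne by (cases "length p") auto
    then have "p ! k \<in> set p" by simp
    then show "p ! k \<in> {0..N+1}" using path_set[OF vn assms] by blast
  qed
  ultimately have "net {0..N+1} (\<lambda>u v. if uses p u v then 1 else 0) x
     = (if p ! (length p - 1) = x then 1 else 0) - (if p ! 0 = x then 1 else 0)"
    using net_walkf[of "{0..N+1}"] by simp
  moreover have "p ! (length p - 1) = N + 1" using path_props(4)[OF vn assms] ne by (simp add: last_conv_nth)
  moreover have "p ! 0 = 0" using path_props(3)[OF vn assms] ne by (simp add: hd_conv_nth)
  ultimately show ?thesis by auto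
qed

lemma pathflow_net:
  assumes "Pth \<subseteq> paths N E" "finite Pth"
  shows "net {0..N+1} (\<lambda>u v. \<Sum>p\<in>{p\<in>Pth. uses p u v}. a p) x
       = (\<Sum>p\<in>Pth. a p) * ((if x = N + 1 then 1 else 0) - (if x = 0 then 1 else 0))"
proof -
  have "(\<lambda>u v. \<Sum>p\<in>{p\<in>Pth. uses p u v}. a p) = (\<lambda>u v. \<Sum>p\<in>Pth. a p * (if uses p u v then 1 else 0))"
  proof (intro ext)
    fix u v
    have "(\<Sum>p\<in>{p\<in>Pth. uses p u v}. a p) = (\<Sum>p\<in>Pth. if uses p u v then a p else 0)"
      by (rule sum.inter_filter[OF assms(2)])
    also have "\<dots> = (\<Sum>p\<in>Pth. a p * (if uses p u v then 1 else 0))" by (intro sum.cong) auto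
    finally show "(\<Sum>p\<in>{p\<in>Pth. uses p u v}. a p) = (\<Sum>p\<in>Pth. a p * (if uses p u v then 1 else 0))" .
  qed
  then have "net {0..N+1} (\<lambda>u v. \<Sum>p\<in>{p\<in>Pth. uses p u v}. a p) x
       = (\<Sum>p\<in>Pth. a p * net {0..N+1} (\<lambda>u v. if uses p u v then 1 else 0) x)"
    using net_sum_set[of "{0..N+1}" a "\<lambda>p u v. if uses p u v then 1 else 0" Pth x] by simp
  also have "\<dots> = (\<Sum>p\<in>Pth. a p * ((if x = N + 1 then 1 else 0) - (if x = 0 then 1 else 0)))"
    using assms(1) path_net by (intro sum.cong) auto
  also have "\<dots> = (\<Sum>p\<in>Pth. a p) * ((if x = N + 1 then 1 else 0) - (if x = 0 then 1 else 0))"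
    by (simp add: sum_distrib_right)
  finally show ?thesis .
qed

end


definition CS :: "nat \<Rightarrow> (nat \<Rightarrow> nat \<Rightarrow> real) \<Rightarrow> real set" where
  "CS N ell = {Min (cut_value N ell lam ` cuts N) | lam. prob_vector N lam}"

lemma C_cs_CS: "C_cs_iid N ell = Sup (CS N ell)"
  unfolding C_cs_iid_def CS_def by simp

lemma CS_ne: "CS N ell \<noteq> {}"
proof -
  define e0 :: state where "e0 = ((\<lambda>_. {}), (\<lambda>_. {}))"
  define lam0 where "lam0 = (\<lambda>s. if s = e0 then (1::real) else 0)"
  have "e0 \<in> fd_states N" unfolding e0_def by (rule empty_state)
  then have "prob_vector N lam0" unfolding prob_vector_def lam0_def
    using finite_fd_states by (simp add: sum.delta)
  then show ?thesis unfolding CS_def by blast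
qed

lemma Min_cut_le:
  assumes "prob_vector N lam" "\<Omega> \<in> cuts N"
  shows "Min (cut_value N ell lam ` cuts N) \<le> cut_value N ell lam \<Omega>"
  using assms finite_cuts by simp

context
  fixes N :: nat and E :: "(nat \<times> nat) set" and ell :: "nat \<Rightarrow> nat \<Rightarrow> real"
  assumes vn: "valid_network N E ell"
begin

lemma CS_bdd: "bdd_above (CS N ell)"
proof (rule bdd_aboveI)
  fix c assume "c \<in> CS N ell"
  then obtain lam where lam: "prob_vector N lam" "c = Min (cut_value N ell lam ` cuts N)"
    unfolding CS_def by blast
  have "c \<le> cut_value N ell lam {0}" using Min_cut_le[OF lam(1) cuts_ne] lam(2) by simp
  also have "\<dots> = (\<Sum>j\<in>{0..N+1} - {0}. yv N lam 0 j * ell j 0)" unfolding cut_value_yv by simp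
  also have "\<dots> \<le> (\<Sum>j\<in>{0..N+1} - {0}. ell j 0)"
    using prob_yv_le1[OF lam(1)] ell_nn[OF vn] by (intro sum_mono mult_left_le_one_le) auto
  finally show "c \<le> (\<Sum>j\<in>{0..N+1} - {0}. ell j 0)" .
qed

lemma CS_le:
  assumes "c \<in> CS N ell"
  shows "c \<le> C_cs_iid N ell"
  unfolding C_cs_CS using assms CS_bdd by (rule cSup_upper)

end


definition state_of :: "nat \<Rightarrow> (bool \<times> nat \<Rightarrow> bool \<times> nat) \<Rightarrow> state" where
  "state_of N \<sigma> = ((\<lambda>i. {j. i \<le> N \<and> 1 \<le> j \<and> j \<le> N + 1 \<and> j \<noteq> i \<and> \<sigma> (False, i) = (False, j)}),
                     (\<lambda>j. {i. i \<le> N \<and> 1 \<le> j \<and> j \<le> N + 1 \<and> j \<noteq> i \<and> \<sigma> (False, i) = (False, j)}))"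

lemma state_of_active:
  "link_active (state_of N \<sigma>) i j \<longleftrightarrow> i \<le> N \<and> 1 \<le> j \<and> j \<le> N + 1 \<and> j \<noteq> i \<and> \<sigma> (False, i) = (False, j)"
  unfolding link_active_def state_of_def by auto

lemma state_of_fd:
  assumes "inj_on \<sigma> ({False} \<times> {0..N})"
  shows "state_of N \<sigma> \<in> fd_states N"
proof -
  define st where "st = (\<lambda>i. {j. i \<le> N \<and> 1 \<le> j \<and> j \<le> N + 1 \<and> j \<noteq> i \<and> \<sigma> (False, i) = (False, j)})"
  define sr where "sr = (\<lambda>j. {i. i \<le> N \<and> 1 \<le> j \<and> j \<le> N + 1 \<and> j \<noteq> i \<and> \<sigma> (False, i) = (False, j)})"
  have eq: "state_of N \<sigma> = (st, sr)" unfolding state_of_def st_def sr_def by simp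
  have c1: "\<And>i. card (st i) \<le> 1"
  proof -
    fix i
    have "st i \<subseteq> {snd (\<sigma> (False, i))}" unfolding st_def by auto
    then have "card (st i) \<le> card {snd (\<sigma> (False, i))}" by (intro card_mono) auto
    then show "card (st i) \<le> 1" by simp
  qed
  have c2: "\<And>j. card (sr j) \<le> 1"
  proof -
    fix j
    have fin: "finite (sr j)" unfolding sr_def by (rule finite_subset[of _ "{0..N}"]) auto
    have "\<forall>a1\<in>sr j. \<forall>a2\<in>sr j. a1 = a2"
    proof (intro ballI)
      fix a1 a2 assume a: "a1 \<in> sr j" "a2 \<in> sr j"
      then have "\<sigma> (False, a1) = \<sigma> (False, a2)" "(False, a1) \<in> {False} \<times> {0..N}" "(False, a2) \<in> {False} \<times> {0..N}"
        unfolding sr_def by auto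
      then show "a1 = a2" using assms by (auto dest: inj_onD)
    qed
    then show "card (sr j) \<le> 1" using card_le_Suc0_iff_eq[OF fin] by simp
  qed
  have "(\<forall>i \<le> N + 1. st i \<subseteq> {1..N+1} - {i} \<and> card (st i) \<le> 1 \<and>
                    sr i \<subseteq> {0..N} - {i} \<and> card (sr i) \<le> 1) \<and>
      (\<forall>i > N + 1. st i = {} \<and> sr i = {}) \<and> sr 0 = {} \<and> st (N + 1) = {}"
  proof (intro conjI allI impI c1 c2)
    fix i
    show "st i \<subseteq> {1..N+1} - {i}" unfolding st_def by auto
    show "sr i \<subseteq> {0..N} - {i}" unfolding sr_def by auto
    show "i > N + 1 \<Longrightarrow> st i = {}" unfolding st_def by auto
    show "i > N + 1 \<Longrightarrow> sr i = {}" unfolding sr_def by auto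
  next
    show "sr 0 = {}" unfolding sr_def by auto
    show "st (N + 1) = {}" unfolding st_def by auto
  qed
  then have "(st, sr) \<in> fd_states N" unfolding fd_states_def by simp
  then show ?thesis using eq by simp
qed

lemma matching_lam:
  fixes z :: "nat \<Rightarrow> nat \<Rightarrow> real"
  assumes zn: "\<forall>i j. 0 \<le> z i j"
    and rows: "\<forall>i\<le>N. (\<Sum>j\<in>{1..N+1}. z i j) \<le> 1"
    and cols: "\<forall>j\<in>{1..N+1}. (\<Sum>i\<in>{0..N}. z i j) \<le> 1"
  shows "\<exists>lam. prob_vector N lam \<and> (\<forall>i j. i \<le> N \<longrightarrow> 1 \<le> j \<longrightarrow> j \<le> N + 1 \<longrightarrow> i \<noteq> j \<longrightarrow> yv N lam i j = z i j)"
proof -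
  define rs where "rs = (\<lambda>i. \<Sum>j\<in>{1..N+1}. z i j)"
  define cs where "cs = (\<lambda>j. \<Sum>i\<in>{0..N}. z i j)"
  define R where "R = {False} \<times> {0..N} \<union> {True} \<times> {1..N+1}"
  define C where "C = {False} \<times> {1..N+1} \<union> {True} \<times> {0..N}"
  define D where "D = (\<lambda>r c. if \<not> fst r \<and> \<not> fst c then z (snd r) (snd c)
     else if \<not> fst r \<and> fst c then (if snd r = snd c then 1 - rs (snd r) else 0)
     else if fst r \<and> \<not> fst c then (if snd r = snd c then 1 - cs (snd r) else 0)
     else z (snd c) (snd r))"
  have finR: "finite R" and finC: "finite C" unfolding R_def C_def by auto
  have Rne: "R \<noteq> {}" unfolding R_def by auto
  have nnD: "\<forall>r\<in>R. \<forall>c\<in>C. D r c \<ge> 0"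
    unfolding R_def C_def D_def rs_def cs_def using zn rows cols by auto
  have rowD: "\<forall>r\<in>R. (\<Sum>c\<in>C. D r c) = 1"
  proof
    fix r assume r: "r \<in> R"
    show "(\<Sum>c\<in>C. D r c) = 1"
    proof (cases "fst r")
      case False
      then obtain i where ri: "r = (False, i)" "i \<le> N" using r unfolding R_def by auto
      have "(\<Sum>c\<in>C. D r c) = (\<Sum>j\<in>{1..N+1}. z i j) + (\<Sum>i'\<in>{0..N}. if i = i' then 1 - rs i else 0)"
        unfolding C_def by (simp add: sum_two_blocks ri D_def)
      also have "\<dots> = rs i + (1 - rs i)" using ri(2) by (simp add: rs_def)
      finally show ?thesis by simp
    next
      case True
      then obtain j where rj: "r = (True, j)" "j \<in> {1..N+1}" using r unfolding R_def by auto
      have "(\<Sum>c\<in>C. D r c) = (\<Sum>j'\<in>{1..N+1}. if j = j' then 1 - cs j else 0) + (\<Sum>i\<in>{0..N}. z i j)"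
        unfolding C_def by (simp add: sum_two_blocks rj D_def)
      also have "\<dots> = (1 - cs j) + cs j" using rj(2) by (simp add: cs_def)
      finally show ?thesis by simp
    qed
  qed
  have colD: "\<forall>c\<in>C. (\<Sum>r\<in>R. D r c) = 1"
  proof
    fix c assume c: "c \<in> C"
    show "(\<Sum>r\<in>R. D r c) = 1"
    proof (cases "fst c")
      case False
      then obtain j where cj: "c = (False, j)" "j \<in> {1..N+1}" using c unfolding C_def by auto
      have "(\<Sum>r\<in>R. D r c) = (\<Sum>i\<in>{0..N}. z i j) + (\<Sum>j'\<in>{1..N+1}. if j' = j then 1 - cs j' else 0)"
        unfolding R_def by (simp add: sum_two_blocks cj D_def)
      also have "\<dots> = cs j + (1 - cs j)" using cj(2) by (simp add: cs_def)
      finally show ?thesis by simp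
    next
      case True
      then obtain i where ci: "c = (True, i)" "i \<le> N" using c unfolding C_def by auto
      have "(\<Sum>r\<in>R. D r c) = (\<Sum>i'\<in>{0..N}. if i' = i then 1 - rs i' else 0) + (\<Sum>j\<in>{1..N+1}. z i j)"
        unfolding R_def by (simp add: sum_two_blocks ci D_def)
      also have "\<dots> = (1 - rs i) + rs i" using ci(2) by (simp add: rs_def)
      finally show ?thesis by simp
    qed
  qed
  obtain S \<mu> where S: "finite S" "\<forall>\<sigma>\<in>S. \<mu> \<sigma> \<ge> 0 \<and> inj_on \<sigma> R \<and> \<sigma> ` R \<subseteq> C"
     "(\<Sum>\<sigma>\<in>S. \<mu> \<sigma>) = 1" "\<forall>r\<in>R. \<forall>c\<in>C. D r c = (\<Sum>\<sigma>\<in>{\<sigma>\<in>S. \<sigma> r = c}. \<mu> \<sigma>)"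
    using birkhoff_aux[OF finR finC Rne nnD rowD colD] by blast
  have injF: "\<forall>\<sigma>\<in>S. inj_on \<sigma> ({False} \<times> {0..N})"
    using S(2) unfolding R_def by (auto intro: inj_on_subset)
  have sfd: "\<forall>\<sigma>\<in>S. state_of N \<sigma> \<in> fd_states N" using injF state_of_fd by blast
  define lam where "lam = (\<lambda>s. \<Sum>\<sigma>\<in>{\<sigma>\<in>S. state_of N \<sigma> = s}. \<mu> \<sigma>)"
  have "prob_vector N lam"
  proof -
    have "\<forall>s\<in>fd_states N. lam s \<ge> 0" unfolding lam_def using S(2) by (auto intro: sum_nonneg)
    moreover have "(\<Sum>s\<in>fd_states N. lam s) = 1"
      unfolding lam_def using sum.group[OF S(1) finite_fd_states, where g="state_of N" and h=\<mu>] sfd S(3) by auto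
    ultimately show ?thesis unfolding prob_vector_def by simp
  qed
  moreover have "\<forall>i j. i \<le> N \<longrightarrow> 1 \<le> j \<longrightarrow> j \<le> N + 1 \<longrightarrow> i \<noteq> j \<longrightarrow> yv N lam i j = z i j"
  proof (intro allI impI)
    fix i j assume ij: "i \<le> N" "1 \<le> j" "j \<le> N + 1" "i \<noteq> j"
    define S' where "S' = {\<sigma>\<in>S. link_active (state_of N \<sigma>) i j}"
    have finS': "finite S'" using S(1) S'_def by simp
    have "yv N lam i j = (\<Sum>s\<in>{s\<in>fd_states N. link_active s i j}. \<Sum>\<sigma>\<in>{\<sigma>\<in>S'. state_of N \<sigma> = s}. \<mu> \<sigma>)"
      unfolding yv_def lam_def S'_def by (intro sum.cong refl) auto
    also have "\<dots> = (\<Sum>\<sigma>\<in>S'. \<mu> \<sigma>)"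
      by (rule sum.group[OF finS']) (use finite_fd_states sfd S'_def in auto)
    also have "\<dots> = (\<Sum>\<sigma>\<in>{\<sigma>\<in>S. \<sigma> (False, i) = (False, j)}. \<mu> \<sigma>)"
      unfolding S'_def state_of_active using ij by (intro sum.cong) auto
    also have "\<dots> = D (False, i) (False, j)"
      using S(4) ij unfolding R_def C_def by auto
    also have "\<dots> = z i j" unfolding D_def by simp
    finally show "yv N lam i j = z i j" .
  qed
  ultimately show ?thesis by blast
qed


context
  fixes N :: nat and E :: "(nat \<times> nat) set" and ell :: "nat \<Rightarrow> nat \<Rightarrow> real"
  assumes vn: "valid_network N E ell"
begin

lemma dirA:
  assumes fx: "P1_feasible N E ell x"
  shows "(\<Sum>p\<in>paths N E. x p * path_cap ell p) \<le> C_cs_iid N ell"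
proof -
  define Pth where "Pth = paths N E"
  define V where "V = {0..N+1::nat}"
  have finP: "finite Pth" unfolding Pth_def by (rule finite_paths[OF vn])
  have xnn: "\<forall>p\<in>Pth. 0 \<le> x p" using fx unfolding P1_feasible_def Pth_def by simp
  define a where "a = (\<lambda>p. x p * path_cap ell p)"
  have ann: "\<forall>p\<in>Pth. 0 \<le> a p"
  proof
    fix p assume p: "p \<in> Pth"
    then have "0 \<le> x p" "0 < path_cap ell p" using xnn path_cap_pos[OF vn] Pth_def by auto
    then show "0 \<le> a p" unfolding a_def by simp
  qed
  define u where "u = (\<lambda>i j. \<Sum>p\<in>{p\<in>Pth. uses p i j}. a p)"
  have unn: "\<And>i j. 0 \<le> u i j" unfolding u_def using ann by (intro sum_nonneg) auto
  have u0: "\<And>i j. (i, j) \<notin> E \<Longrightarrow> u i j = 0"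
  proof -
    fix i j assume "(i, j) \<notin> E"
    then have e: "{p\<in>Pth. uses p i j} = {}" using uses_E[OF vn] Pth_def by blast
    show "u i j = 0" unfolding u_def e by simp
  qed
  define z where "z = (\<lambda>i j. u i j / ell j i)"
  have znn: "\<forall>i j. 0 \<le> z i j" unfolding z_def using unn ell_nn[OF vn] by simp
  have zrow: "\<And>i. i \<le> N \<Longrightarrow> (\<Sum>j\<in>V. z i j) \<le> 1"
  proof -
    fix i assume i: "i \<le> N"
    have "(\<Sum>j\<in>V. z i j) = (\<Sum>j\<in>V. \<Sum>p\<in>{p\<in>Pth. uses p i j}. a p / ell j i)"
      unfolding z_def u_def by (simp add: sum_divide_distrib)
    also have "\<dots> = (\<Sum>p\<in>{p\<in>Pth. i \<in> set p}. a p / ell (nx p i) i)"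
      unfolding V_def using reg_out[OF vn i, of Pth "\<lambda>p j. a p / ell j i"] Pth_def by simp
    also have "\<dots> = (\<Sum>p\<in>{p\<in>Pth. i \<in> set p}. x p * fp ell p (nx p i) i)"
      unfolding a_def fp_def by simp
    also have "\<dots> \<le> 1" using fx i unfolding P1_feasible_def Pth_def by simp
    finally show "(\<Sum>j\<in>V. z i j) \<le> 1" .
  qed
  have zcol: "\<And>j. j \<in> {1..N+1} \<Longrightarrow> (\<Sum>i\<in>V. z i j) \<le> 1"
  proof -
    fix j assume j: "j \<in> {1..N+1}"
    have "(\<Sum>i\<in>V. z i j) = (\<Sum>i\<in>V. \<Sum>p\<in>{p\<in>Pth. uses p i j}. a p / ell j i)"
      unfolding z_def u_def by (simp add: sum_divide_distrib)
    also have "\<dots> = (\<Sum>p\<in>{p\<in>Pth. j \<in> set p}. a p / ell j (pr p j))"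
      unfolding V_def using reg_in[OF vn _, of j Pth "\<lambda>p i. a p / ell j i"] j Pth_def by simp
    also have "\<dots> = (\<Sum>p\<in>{p\<in>Pth. j \<in> set p}. x p * fp ell p j (pr p j))"
      unfolding a_def fp_def by simp
    also have "\<dots> \<le> 1" using fx j unfolding P1_feasible_def Pth_def by simp
    finally show "(\<Sum>i\<in>V. z i j) \<le> 1" .
  qed
  have rows: "\<forall>i\<le>N. (\<Sum>j\<in>{1..N+1}. z i j) \<le> 1"
  proof (intro allI impI)
    fix i assume i: "i \<le> N"
    have "(\<Sum>j\<in>{1..N+1}. z i j) \<le> (\<Sum>j\<in>V. z i j)" unfolding V_def using znn by (intro sum_mono2) auto
    then show "(\<Sum>j\<in>{1..N+1}. z i j) \<le> 1" using zrow[OF i] by simp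
  qed
  have cols: "\<forall>j\<in>{1..N+1}. (\<Sum>i\<in>{0..N}. z i j) \<le> 1"
  proof
    fix j assume j: "j \<in> {1..N+1}"
    have "(\<Sum>i\<in>{0..N}. z i j) \<le> (\<Sum>i\<in>V. z i j)" unfolding V_def using znn by (intro sum_mono2) auto
    then show "(\<Sum>i\<in>{0..N}. z i j) \<le> 1" using zcol[OF j] by simp
  qed
  obtain lam where lam: "prob_vector N lam"
    "\<forall>i j. i \<le> N \<longrightarrow> 1 \<le> j \<longrightarrow> j \<le> N + 1 \<longrightarrow> i \<noteq> j \<longrightarrow> yv N lam i j = z i j"
    using matching_lam[OF znn rows cols] by blast
  have uz: "\<And>i j. z i j * ell j i = u i j"
  proof -
    fix i j
    show "z i j * ell j i = u i j"
    proof (cases "(i, j) \<in> E")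
      case True
      then have "ell j i > 0" by (rule ell_pos[OF vn])
      then show ?thesis unfolding z_def by simp
    next
      case False
      then show ?thesis using u0 unfolding z_def by simp
    qed
  qed
  have netu: "\<And>x. net V u x = (\<Sum>p\<in>Pth. a p) * ((if x = N + 1 then 1 else 0) - (if x = 0 then 1 else 0))"
    unfolding u_def V_def by (rule pathflow_net[OF vn]) (use Pth_def finP in auto)
  have cutge: "\<And>\<Omega>. \<Omega> \<in> cuts N \<Longrightarrow> (\<Sum>p\<in>Pth. a p) \<le> cut_value N ell lam \<Omega>"
  proof -
    fix \<Omega> assume \<Omega>: "\<Omega> \<in> cuts N"
    then have \<Omega>0: "0 \<in> \<Omega>" and \<Omega>N: "\<Omega> \<subseteq> {0..N}" unfolding cuts_def by auto
    have \<Omega>V: "\<Omega> \<subseteq> V" using \<Omega>N unfolding V_def by auto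
    have "cut_value N ell lam \<Omega> = (\<Sum>i\<in>\<Omega>. \<Sum>j\<in>V - \<Omega>. u i j)"
      unfolding cut_value_yv V_def
    proof (intro sum.cong refl)
      fix i j assume i: "i \<in> \<Omega>" and j: "j \<in> {0..N+1} - \<Omega>"
      have "i \<le> N" using i \<Omega>N by auto
      moreover have "1 \<le> j" "j \<le> N + 1" "i \<noteq> j" using j \<Omega>0 i by (auto simp: Suc_le_eq intro!: Nat.gr0I)
      ultimately have "yv N lam i j = z i j" using lam(2) by blast
      then show "yv N lam i j * ell j i = u i j" using uz by simp
    qed
    also have "(\<Sum>i\<in>\<Omega>. \<Sum>j\<in>V - \<Omega>. u i j) = - net V u 0 + (\<Sum>i\<in>V - \<Omega>. \<Sum>j\<in>\<Omega>. u i j)"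
    proof -
      have "- net V u 0 = (\<Sum>i\<in>\<Omega>. \<Sum>j\<in>V - \<Omega>. u i j) - (\<Sum>i\<in>V - \<Omega>. \<Sum>j\<in>\<Omega>. u i j)"
      proof (rule cut_lemma)
        show "finite V" unfolding V_def by simp
        show "\<Omega> \<subseteq> V" by (rule \<Omega>V)
        show "0 \<in> \<Omega>" by (rule \<Omega>0)
        show "\<forall>x\<in>\<Omega> - {0}. net V u x = 0" using netu \<Omega>N by auto
      qed
      then show ?thesis by simp
    qed
    also have "- net V u 0 = (\<Sum>p\<in>Pth. a p)" using netu[of 0] by simp
    finally have "cut_value N ell lam \<Omega> = (\<Sum>p\<in>Pth. a p) + (\<Sum>i\<in>V - \<Omega>. \<Sum>j\<in>\<Omega>. u i j)" .
    moreover have "0 \<le> (\<Sum>i\<in>V - \<Omega>. \<Sum>j\<in>\<Omega>. u i j)" using unn by (intro sum_nonneg) auto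
    ultimately show "(\<Sum>p\<in>Pth. a p) \<le> cut_value N ell lam \<Omega>" by simp
  qed
  have "(\<Sum>p\<in>Pth. a p) \<le> Min (cut_value N ell lam ` cuts N)"
    using cutge finite_cuts cuts_ne by (subst Min_ge_iff) auto
  also have "\<dots> \<le> C_cs_iid N ell"
    using lam(1) unfolding CS_def by (intro CS_le[OF vn]) (auto simp: CS_def)
  finally show ?thesis unfolding a_def Pth_def .
qed

end


lemma sum_restrict_sub:
  assumes "finite A" "P \<subseteq> A"
  shows "(\<Sum>p\<in>{p\<in>A. Q p}. if p \<in> P then f p else (0::real)) = (\<Sum>p\<in>{p\<in>P. Q p}. f p)"
proof -
  have "(\<Sum>p\<in>{p\<in>A. Q p}. if p \<in> P then f p else (0::real)) = (\<Sum>p\<in>{p\<in>P. Q p}. if p \<in> P then f p else 0)"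
    by (rule sum.mono_neutral_right) (use assms in auto)
  also have "\<dots> = (\<Sum>p\<in>{p\<in>P. Q p}. f p)" by (intro sum.cong) auto
  finally show ?thesis .
qed

lemma P1_zero: "P1_feasible N E ell (\<lambda>_. 0)"
  unfolding P1_feasible_def by simp

context
  fixes N :: nat and E :: "(nat \<times> nat) set" and ell :: "nat \<Rightarrow> nat \<Rightarrow> real"
  assumes vn: "valid_network N E ell"
begin

lemma P1_bdd: "bdd_above {(\<Sum>p \<in> paths N E. x p * path_cap ell p) | x. P1_feasible N E ell x}"
  by (rule bdd_aboveI[of _ "C_cs_iid N ell"]) (use dirA[OF vn] in auto)

lemma dirB:
  assumes lam: "prob_vector N lam"
  shows "Min (cut_value N ell lam ` cuts N) \<le> P1_value N E ell"
proof -
  define V where "V = {0..N+1::nat}"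
  define Pth where "Pth = paths N E"
  have finP: "finite Pth" unfolding Pth_def by (rule finite_paths[OF vn])
  define cap where "cap = (\<lambda>i j. yv N lam i j * ell j i)"
  have capnn: "\<forall>u\<in>V. \<forall>v\<in>V. cap u v \<ge> 0"
    unfolding cap_def using prob_yv_le1[OF lam] ell_nn[OF vn] by auto
  have Vs: "finite V" "0 \<in> V" "N + 1 \<in> V" "(0::nat) \<noteq> N + 1" unfolding V_def by auto
  obtain g where g: "isflow V 0 (N+1) cap g" "\<forall>g'. isflow V 0 (N+1) cap g' \<longrightarrow> - net V g' 0 \<le> - net V g 0"
    using maxflow_exists[OF Vs capnn] by blast
  obtain \<Omega> where \<Omega>: "0 \<in> \<Omega>" "\<Omega> \<subseteq> V" "N + 1 \<notin> \<Omega>" "- net V g 0 = (\<Sum>i\<in>\<Omega>. \<Sum>j\<in>V - \<Omega>. cap i j)"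
    using maxflow_cut[OF Vs g] by blast
  have \<Omega>cut: "\<Omega> \<in> cuts N" unfolding cuts_def using \<Omega>(1,2,3) unfolding V_def by (auto simp: subset_iff le_Suc_eq)
  have minle: "Min (cut_value N ell lam ` cuts N) \<le> - net V g 0"
    using Min_cut_le[OF lam \<Omega>cut] \<Omega>(4) unfolding cut_value_yv cap_def V_def by simp
  have gnn: "\<forall>u\<in>V. \<forall>v\<in>V. 0 \<le> g u v" and gcap: "\<forall>u\<in>V. \<forall>v\<in>V. g u v \<le> cap u v"
    and gcons: "\<forall>x\<in>V - {0, N + 1}. net V g x = 0" using g(1) unfolding isflow_def by auto
  obtain P a where Pa: "finite P" "\<forall>p\<in>P. distinct p \<and> p \<noteq> [] \<and> hd p = 0 \<and> last p = N + 1 \<and>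
      (\<forall>k. Suc k < length p \<longrightarrow> p ! k \<in> V \<and> p ! Suc k \<in> V \<and> 0 < g (p ! k) (p ! Suc k)) \<and> 0 \<le> a p"
      "- net V g 0 \<le> (\<Sum>p\<in>P. a p)"
      "\<forall>u\<in>V. \<forall>v\<in>V. (\<Sum>p\<in>{p\<in>P. uses p u v}. a p) \<le> g u v"
    using decompose[OF Vs gnn gcons] by blast
  have PP: "P \<subseteq> Pth"
  proof
    fix p assume p: "p \<in> P"
    have "\<forall>k. Suc k < length p \<longrightarrow> (p ! k, p ! Suc k) \<in> E"
    proof (intro allI impI)
      fix k assume k: "Suc k < length p"
      then have "p ! k \<in> V" "p ! Suc k \<in> V" "0 < g (p ! k) (p ! Suc k)" using Pa(2) p by auto
      then have "0 < cap (p ! k) (p ! Suc k)" using gcap by fastforce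
      then have "ell (p ! Suc k) (p ! k) \<noteq> 0" unfolding cap_def by auto
      then show "(p ! k, p ! Suc k) \<in> E" using ell_zero[OF vn] by blast
    qed
    then show "p \<in> Pth" unfolding Pth_def paths_def using Pa(2) p by auto
  qed
  define x where "x = (\<lambda>p. if p \<in> P then a p / path_cap ell p else 0)"
  have xa: "\<And>p. p \<in> Pth \<Longrightarrow> x p * path_cap ell p = (if p \<in> P then a p else 0)"
  proof -
    fix p assume "p \<in> Pth"
    then have "path_cap ell p > 0" unfolding Pth_def by (rule path_cap_pos[OF vn])
    then show "x p * path_cap ell p = (if p \<in> P then a p else 0)" unfolding x_def by simp
  qed
  have "P1_feasible N E ell x"
    unfolding P1_feasible_def
  proof (intro conjI ballI)
    fix p assume "p \<in> paths N E"
    then show "0 \<le> x p" unfolding x_def using Pa(2) path_cap_pos[OF vn] by (auto intro: divide_nonneg_pos)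
  next
    fix i assume i: "i \<in> {0..N}"
    have "(\<Sum>p\<in>{p\<in>paths N E. i \<in> set p}. x p * fp ell p (nx p i) i)
        = (\<Sum>p\<in>{p\<in>Pth. i \<in> set p}. (if p \<in> P then a p else 0) / ell (nx p i) i)"
      unfolding Pth_def fp_def by (intro sum.cong refl) (use xa Pth_def in \<open>auto simp: times_divide_eq_right[symmetric]\<close>)
    also have "\<dots> = (\<Sum>j\<in>V. \<Sum>p\<in>{p\<in>Pth. uses p i j}. (if p \<in> P then a p else 0) / ell j i)"
      unfolding V_def using reg_out[OF vn _ , of i Pth "\<lambda>p j. (if p \<in> P then a p else 0) / ell j i"] i Pth_def by simp
    also have "\<dots> = (\<Sum>j\<in>V. (\<Sum>p\<in>{p\<in>Pth. uses p i j}. (if p \<in> P then a p else 0)) / ell j i)"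
      by (simp add: sum_divide_distrib)
    also have "\<dots> = (\<Sum>j\<in>V. (\<Sum>p\<in>{p\<in>P. uses p i j}. a p) / ell j i)"
      using sum_restrict_sub[OF finP PP] by simp
    also have "\<dots> \<le> (\<Sum>j\<in>V. yv N lam i j)"
    proof (rule sum_mono)
      fix j assume j: "j \<in> V"
      have iV: "i \<in> V" using i unfolding V_def by auto
      have le: "(\<Sum>p\<in>{p\<in>P. uses p i j}. a p) \<le> cap i j" using Pa(4) gcap iV j by (meson order_trans)
      show "(\<Sum>p\<in>{p\<in>P. uses p i j}. a p) / ell j i \<le> yv N lam i j"
      proof (cases "ell j i = 0")
        case True then show ?thesis using prob_yv_le1(2)[OF lam] by simp
      next
        case False
        then have "ell j i > 0" using ell_nn[OF vn, of j i] by linarith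
        then show ?thesis using le unfolding cap_def by (simp add: divide_le_eq)
      qed
    qed
    also have "\<dots> \<le> 1" unfolding V_def using prob_out_le1[OF lam] i by simp
    finally show "(\<Sum>p\<in>{p\<in>paths N E. i \<in> set p}. x p * fp ell p (nx p i) i) \<le> 1" .
  next
    fix j assume j: "j \<in> {1..N+1}"
    have "(\<Sum>p\<in>{p\<in>paths N E. j \<in> set p}. x p * fp ell p j (pr p j))
        = (\<Sum>p\<in>{p\<in>Pth. j \<in> set p}. (if p \<in> P then a p else 0) / ell j (pr p j))"
      unfolding Pth_def fp_def by (intro sum.cong refl) (use xa Pth_def in \<open>auto simp: times_divide_eq_right[symmetric]\<close>)
    also have "\<dots> = (\<Sum>i\<in>V. \<Sum>p\<in>{p\<in>Pth. uses p i j}. (if p \<in> P then a p else 0) / ell j i)"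
      unfolding V_def using reg_in[OF vn _ , of j Pth "\<lambda>p i. (if p \<in> P then a p else 0) / ell j i"] j Pth_def by simp
    also have "\<dots> = (\<Sum>i\<in>V. (\<Sum>p\<in>{p\<in>Pth. uses p i j}. (if p \<in> P then a p else 0)) / ell j i)"
      by (simp add: sum_divide_distrib)
    also have "\<dots> = (\<Sum>i\<in>V. (\<Sum>p\<in>{p\<in>P. uses p i j}. a p) / ell j i)"
      using sum_restrict_sub[OF finP PP] by simp
    also have "\<dots> \<le> (\<Sum>i\<in>V. yv N lam i j)"
    proof (rule sum_mono)
      fix i assume i: "i \<in> V"
      have jV: "j \<in> V" using j unfolding V_def by auto
      have le: "(\<Sum>p\<in>{p\<in>P. uses p i j}. a p) \<le> cap i j" using Pa(4) gcap jV i by (meson order_trans)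
      show "(\<Sum>p\<in>{p\<in>P. uses p i j}. a p) / ell j i \<le> yv N lam i j"
      proof (cases "ell j i = 0")
        case True then show ?thesis using prob_yv_le1(2)[OF lam] by simp
      next
        case False
        then have "ell j i > 0" using ell_nn[OF vn, of j i] by linarith
        then show ?thesis using le unfolding cap_def by (simp add: divide_le_eq)
      qed
    qed
    also have "\<dots> \<le> 1" unfolding V_def using prob_in_le1[OF lam] j by simp
    finally show "(\<Sum>p\<in>{p\<in>paths N E. j \<in> set p}. x p * fp ell p j (pr p j)) \<le> 1" .
  qed
  moreover have "(\<Sum>p\<in>paths N E. x p * path_cap ell p) = (\<Sum>p\<in>P. a p)"
  proof -
    have "(\<Sum>p\<in>paths N E. x p * path_cap ell p) = (\<Sum>p\<in>{p\<in>Pth. True}. if p \<in> P then a p else 0)"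
      using xa unfolding Pth_def by (intro sum.cong) auto
    also have "\<dots> = (\<Sum>p\<in>{p\<in>P. True}. a p)" by (rule sum_restrict_sub[OF finP PP])
    finally show ?thesis by simp
  qed
  ultimately have "(\<Sum>p\<in>P. a p) \<le> P1_value N E ell"
    unfolding P1_value_def using P1_bdd by (intro cSup_upper) (auto, metis)
  then show ?thesis using minle Pa(3) by linarith
qed

theorem main_eq: "C_cs_iid N ell = P1_value N E ell"
proof (rule antisym)
  show "C_cs_iid N ell \<le> P1_value N E ell"
    unfolding C_cs_CS
  proof (rule cSup_least[OF CS_ne])
    fix c assume "c \<in> CS N ell"
    then obtain lam where "prob_vector N lam" "c = Min (cut_value N ell lam ` cuts N)"
      unfolding CS_def by blast
    then show "c \<le> P1_value N E ell" using dirB by simp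
  qed
  show "P1_value N E ell \<le> C_cs_iid N ell"
    unfolding P1_value_def
  proof (rule cSup_least)
    show "{(\<Sum>p \<in> paths N E. x p * path_cap ell p) | x. P1_feasible N E ell x} \<noteq> {}"
      using P1_zero by blast
  next
    fix c assume "c \<in> {(\<Sum>p \<in> paths N E. x p * path_cap ell p) | x. P1_feasible N E ell x}"
    then show "c \<le> C_cs_iid N ell" using dirA[OF vn] by auto
  qed
qed

end


theorem theorem2:
  fixes N :: nat and E :: "(nat \<times> nat) set" and ell :: "nat \<Rightarrow> nat \<Rightarrow> real"
  assumes "valid_network N E ell"
  shows "C_cs_iid N ell = P1_value N E ell"
  by (rule main_eq[OF assms])

end
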